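(* Let $k=\mathbb{F}_q$ with $q$ a power of $2$. Every non-singular quartic plane curve $C\subseteq\mathbb{P}^2$ defined over $k$ with exactly two bitangents is $k$-isomorphic to a curve $C_Q: Q(x,y,z)^2=xy(y^2+xz)$, where $Q=ax^2+by^2+cz^2+dxy+eyz+fzx$ has coefficients in $k$ and $ac\neq0$.
   Context: Bitangents are lines in $\mathbb{P}^2$ (over $\overline{k}$) tangent to $C$ at two points or with contact of order 4. In characteristic 2 a non-singular plane quartic has 7, 4, 2 or 1 bitangents. *)

theory Defs
  imports "HOL-Computational_Algebra.Polynomial"
begin

text \<open>Points of the affine 3-space over a field (homogeneous coordinates of the plane).\<close>
type_synonym 'a pt = "'a \<times> 'a \<times> 'a"

text \<open>Ternary forms are given by coefficient functions on exponent triples.\<close>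
definition mons :: "nat \<Rightarrow> (nat \<times> nat \<times> nat) set" where
  "mons d = {(i, j, l). i + j + l = d}"

definition is_form :: "nat \<Rightarrow> (nat \<times> nat \<times> nat \<Rightarrow> 'a::zero) \<Rightarrow> bool" where
  "is_form d F \<longleftrightarrow> (\<forall>m. m \<notin> mons d \<longrightarrow> F m = 0)"

fun evf :: "(nat \<times> nat \<times> nat \<Rightarrow> 'a::comm_semiring_1) \<Rightarrow> nat \<Rightarrow> 'a pt \<Rightarrow> 'a" where
  "evf F d (x, y, z) = (\<Sum>(i, j, l)\<in>mons d. F (i, j, l) * x ^ i * y ^ j * z ^ l)"

fun dX :: "(nat \<times> nat \<times> nat \<Rightarrow> 'a::comm_semiring_1) \<Rightarrow> nat \<times> nat \<times> nat \<Rightarrow> 'a" where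
  "dX F (i, j, l) = of_nat (Suc i) * F (Suc i, j, l)"
fun dY :: "(nat \<times> nat \<times> nat \<Rightarrow> 'a::comm_semiring_1) \<Rightarrow> nat \<times> nat \<times> nat \<Rightarrow> 'a" where
  "dY F (i, j, l) = of_nat (Suc j) * F (i, Suc j, l)"
fun dZ :: "(nat \<times> nat \<times> nat \<Rightarrow> 'a::comm_semiring_1) \<Rightarrow> nat \<times> nat \<times> nat \<Rightarrow> 'a" where
  "dZ F (i, j, l) = of_nat (Suc l) * F (i, j, Suc l)"

text \<open>The quartic F = 0 is non-singular (over the ambient field, here the algebraic closure).\<close>
definition nonsingular_quartic :: "(nat \<times> nat \<times> nat \<Rightarrow> 'a::field) \<Rightarrow> bool" where
  "nonsingular_quartic F \<longleftrightarrow>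
     (\<forall>p. p \<noteq> (0, 0, 0) \<longrightarrow>
        \<not> (evf F 4 p = 0 \<and> evf (dX F) 3 p = 0 \<and> evf (dY F) 3 p = 0 \<and> evf (dZ F) 3 p = 0))"

fun restr :: "(nat \<times> nat \<times> nat \<Rightarrow> 'a::field) \<Rightarrow> 'a pt \<Rightarrow> 'a pt \<Rightarrow> 'a poly" where
  "restr F (p1, p2, p3) (r1, r2, r3) =
     (\<Sum>(i, j, l)\<in>mons 4. smult (F (i, j, l)) ([:p1, r1:] ^ i * [:p2, r2:] ^ j * [:p3, r3:] ^ l))"

text \<open>Intersection multiplicity at P of the curve with the line through P and R.\<close>
definition imult :: "(nat \<times> nat \<times> nat \<Rightarrow> 'a::field) \<Rightarrow> 'a pt \<Rightarrow> 'a pt \<Rightarrow> nat" where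
  "imult F P R = order 0 (restr F P R)"

fun on_line :: "'a::comm_semiring_1 pt \<Rightarrow> 'a pt \<Rightarrow> bool" where
  "on_line (u, v, w) (x, y, z) \<longleftrightarrow> u * x + v * y + w * z = 0"

fun scal :: "'a::comm_semiring_1 \<Rightarrow> 'a pt \<Rightarrow> 'a pt" where
  "scal c (x, y, z) = (c * x, c * y, c * z)"

fun addp :: "'a::comm_semiring_1 pt \<Rightarrow> 'a pt \<Rightarrow> 'a pt" where
  "addp (x, y, z) (x', y', z') = (x + x', y + y', z + z')"

text \<open>P and R are linearly independent, i.e. distinct points of the projective plane.\<close>
definition indep :: "'a::field pt \<Rightarrow> 'a pt \<Rightarrow> bool" where
  "indep P R \<longleftrightarrow> (\<forall>a b. addp (scal a P) (scal b R) = (0, 0, 0) \<longrightarrow> a = 0 \<and> b = 0)"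

text \<open>Bitangent line L (coefficient vector): not a component, and tangent at two distinct
  points or with contact of order (at least) 4 at one point.\<close>
definition is_bitangent :: "(nat \<times> nat \<times> nat \<Rightarrow> 'a::field) \<Rightarrow> 'a pt \<Rightarrow> bool" where
  "is_bitangent F L \<longleftrightarrow> L \<noteq> (0, 0, 0) \<and>
     (\<exists>P. on_line L P \<and> evf F 4 P \<noteq> 0) \<and>
     ((\<exists>P R. on_line L P \<and> on_line L R \<and> indep P R \<and> imult F P R \<ge> 2 \<and> imult F R P \<ge> 2) \<or>
      (\<exists>P R. on_line L P \<and> on_line L R \<and> indep P R \<and> imult F P R \<ge> 4))"

definition line_set :: "'a::comm_semiring_1 pt \<Rightarrow> 'a pt set" where
  "line_set L = {P. on_line L P}"

text \<open>The set of bitangents (as lines, i.e. point sets in the plane).\<close>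
definition bitangents :: "(nat \<times> nat \<times> nat \<Rightarrow> 'a::field) \<Rightarrow> 'a pt set set" where
  "bitangents F = {line_set L | L. is_bitangent F L}"

definition alg_closed :: "'a::field itself \<Rightarrow> bool" where
  "alg_closed _ \<longleftrightarrow> (\<forall>p :: 'a poly. degree p > 0 \<longrightarrow> (\<exists>x. poly p x = 0))"

definition is_subfield :: "'a::field set \<Rightarrow> bool" where
  "is_subfield k \<longleftrightarrow> 0 \<in> k \<and> 1 \<in> k \<and> (\<forall>x\<in>k. \<forall>y\<in>k. x + y \<in> k \<and> x * y \<in> k)
     \<and> (\<forall>x\<in>k. - x \<in> k) \<and> (\<forall>x\<in>k. x \<noteq> 0 \<longrightarrow> inverse x \<in> k)"

definition algebraic_over :: "'a::field set \<Rightarrow> 'a \<Rightarrow> bool" where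
  "algebraic_over k x \<longleftrightarrow> (\<exists>p. p \<noteq> 0 \<and> (\<forall>i. coeff p i \<in> k) \<and> poly p x = 0)"

text \<open>3x3 matrices as functions on indices 0,1,2.\<close>
definition det3 :: "(nat \<Rightarrow> nat \<Rightarrow> 'a::comm_ring_1) \<Rightarrow> 'a" where
  "det3 M = M 0 0 * (M 1 1 * M 2 2 - M 1 2 * M 2 1)
          - M 0 1 * (M 1 0 * M 2 2 - M 1 2 * M 2 0)
          + M 0 2 * (M 1 0 * M 2 1 - M 1 1 * M 2 0)"

fun mapply :: "(nat \<Rightarrow> nat \<Rightarrow> 'a::comm_semiring_1) \<Rightarrow> 'a pt \<Rightarrow> 'a pt" where
  "mapply M (x, y, z) =
     (M 0 0 * x + M 0 1 * y + M 0 2 * z,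
      M 1 0 * x + M 1 1 * y + M 1 2 * z,
      M 2 0 * x + M 2 1 * y + M 2 2 * z)"

end

theory Submission
  imports Defs
begin

abbreviation px :: "'a pt \<Rightarrow> 'a" where "px a \<equiv> fst a"
abbreviation py :: "'a pt \<Rightarrow> 'a" where "py a \<equiv> fst (snd a)"
abbreviation pz :: "'a pt \<Rightarrow> 'a" where "pz a \<equiv> snd (snd a)"

lemma pt_eq_iff: "(a::'a pt) = b \<longleftrightarrow> px a = px b \<and> py a = py b \<and> pz a = pz b"
  by (simp add: prod_eq_iff)

definition dot :: "'a::comm_ring_1 pt \<Rightarrow> 'a pt \<Rightarrow> 'a" where
  "dot a b = px a * px b + py a * py b + pz a * pz b"
definition cross :: "'a::comm_ring_1 pt \<Rightarrow> 'a pt \<Rightarrow> 'a pt" where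
  "cross a b = (py a * pz b - pz a * py b, pz a * px b - px a * pz b, px a * py b - py a * px b)"
definition sq :: "'a::comm_ring_1 pt \<Rightarrow> 'a pt" where
  "sq a = (px a ^ 2, py a ^ 2, pz a ^ 2)"
definition det :: "'a::comm_ring_1 pt \<Rightarrow> 'a pt \<Rightarrow> 'a pt \<Rightarrow> 'a" where
  "det a b c = dot a (cross b c)"

lemma addp_alt: "addp a b = (px a + px b, py a + py b, pz a + pz b)"
  by (cases a; cases b) simp
lemma scal_alt: "scal c a = (c * px a, c * py a, c * pz a)"
  by (cases a) simp
lemma on_line_dot: "on_line L P \<longleftrightarrow> dot L P = 0"
  by (cases L; cases P) (simp add: dot_def)

lemmas vsimps = dot_def cross_def sq_def det_def addp_alt scal_alt pt_eq_iff

lemma dot_comm: "dot a b = dot b a" by (simp add: vsimps algebra_simps)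
lemma cross_perp1: "dot a (cross a b) = 0" by (simp add: vsimps algebra_simps)
lemma cross_perp2: "dot b (cross a b) = 0" by (simp add: vsimps algebra_simps)
lemma cross_self: "cross a a = (0,0,0)" by (simp add: vsimps algebra_simps)
lemma cross_anti: "cross b a = scal (-1) (cross a b)" by (simp add: vsimps algebra_simps)
lemma det_cyc: "det a b c = det b c a" by (simp add: vsimps algebra_simps)
lemma det_swap: "det b a c = - det a b c" by (simp add: vsimps algebra_simps)
lemma cross_scal1: "cross (scal c a) b = scal c (cross a b)" by (simp add: vsimps algebra_simps)
lemma cross_scal2: "cross a (scal c b) = scal c (cross a b)" by (simp add: vsimps algebra_simps)
lemma cross_add1: "cross (addp a a') b = addp (cross a b) (cross a' b)" by (simp add: vsimps algebra_simps)
lemma cross_add2: "cross a (addp b b') = addp (cross a b) (cross a b')" by (simp add: vsimps algebra_simps)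
lemma dot_scal1: "dot (scal c a) b = c * dot a b" by (simp add: vsimps algebra_simps)
lemma dot_scal2: "dot a (scal c b) = c * dot a b" by (simp add: vsimps algebra_simps)
lemma dot_add1: "dot (addp a a') b = dot a b + dot a' b" by (simp add: vsimps algebra_simps)
lemma dot_add2: "dot a (addp b b') = dot a b + dot a b'" by (simp add: vsimps algebra_simps)
lemma cross_cross: "cross (cross a b) u = addp (scal (dot a u) b) (scal (- dot b u) a)"
  by (simp add: vsimps algebra_simps)
lemma cramer: "scal (det a b w) u = addp (addp (scal (det u b w) a) (scal (det a u w) b)) (scal (det a b u) w)"
  by (simp add: vsimps algebra_simps)
lemma det_cross_cross: "det (cross b m) (cross m a) (cross a b) = (det a b m)^2"
  by (simp add: vsimps power2_eq_square algebra_simps)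


lemma c2_neg: "(2::'a::comm_ring_1) = 0 \<Longrightarrow> - x = (x::'a)"
proof -
  assume h: "(2::'a) = 0"
  have "x + x = 2 * x" by simp
  then have "x + x = 0" using h by simp
  then show ?thesis by (simp add: add_eq_0_iff)
qed
lemma c2_minus: "(2::'a::comm_ring_1) = 0 \<Longrightarrow> x - y = x + (y::'a)"
  using c2_neg[of y] by (metis diff_conv_add_uminus)
lemma c2_double: "(2::'a::comm_ring_1) = 0 \<Longrightarrow> x + x = (0::'a)"
  by (metis c2_neg add.right_inverse)
lemma c2_num3: "(2::'a::comm_ring_1) = 0 \<Longrightarrow> (3::'a) = 1"
  by (metis add_0 numeral_Bit1 numeral_One one_add_one)
lemma c2_num4: "(2::'a::comm_ring_1) = 0 \<Longrightarrow> (4::'a) = 0"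
  by (metis mult_2 mult_zero_left numeral_Bit0 numeral_times_numeral semiring_norm(12)) 
lemma c2_sq_add: "(2::'a::comm_ring_1) = 0 \<Longrightarrow> (x + y)^2 = x^2 + (y::'a)^2"
  by (simp add: power2_sum)

lemma c2_sqrt_unique: "(2::'a::idom) = 0 \<Longrightarrow> x^2 = y^2 \<Longrightarrow> x = (y::'a)"
proof -
  assume h: "(2::'a) = 0" "x^2 = y^2"
  have "(x + y)^2 = 0" using h by (simp add: power2_sum c2_double)
  then have "x + y = 0" by simp
  then show ?thesis using c2_neg[OF h(1), of y] by (metis add_eq_0_iff2 )
qed

lemma vsq_add: "(2::'a::comm_ring_1) = 0 \<Longrightarrow> sq (addp a b) = addp (sq a) (sq (b::'a pt))"
  by (simp add: vsimps c2_sq_add)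
lemma vsq_scal: "sq (scal c a) = scal (c^2) (sq a)"
  by (simp add: vsimps power_mult_distrib)
lemma dot_sq: "(2::'a::comm_ring_1) = 0 \<Longrightarrow> dot (sq a) (sq b) = (dot a (b::'a pt))^2"
  by (simp add: vsimps c2_sq_add power_mult_distrib)
lemma det_sq: "(2::'a::comm_ring_1) = 0 \<Longrightarrow> det (sq a) (sq b) (sq c) = (det a b (c::'a pt))^2"
  by (simp add: vsimps c2_sq_add power_mult_distrib c2_minus algebra_simps)


lemma zero_pt: "(a::'a::zero pt) \<noteq> (0,0,0) \<longleftrightarrow> px a \<noteq> 0 \<or> py a \<noteq> 0 \<or> pz a \<noteq> 0"
  by (auto simp: pt_eq_iff)

lemma scal_scal: "scal c (scal d a) = scal (c*d) a" by (simp add: vsimps algebra_simps)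
lemma scal_addp: "scal c (addp a b) = addp (scal c a) (scal c b)" by (simp add: vsimps algebra_simps)
lemma scal_one: "scal 1 a = a" by (simp add: vsimps)
lemma scal_cancel:
  fixes u v :: "'a::field pt"
  assumes "D \<noteq> 0" "scal D u = v" shows "u = scal (inverse D) v"
  using assms by (auto simp: vsimps field_simps)

lemma par_scal:
  fixes a b :: "'a::field pt"
  assumes "b \<noteq> (0,0,0)" "cross a b = (0,0,0)"
  shows "\<exists>s. a = scal s b"
proof -
  from assms(2) have e: "py a * pz b = pz a * py b" "pz a * px b = px a * pz b" "px a * py b = py a * px b"
    by (auto simp: vsimps)
  consider "px b \<noteq> 0" | "py b \<noteq> 0" | "pz b \<noteq> 0" using assms(1) by (auto simp: pt_eq_iff)
  then show ?thesis
  proof cases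
    case 1 then show ?thesis using e by (intro exI[of _ "px a / px b"]) (auto simp: vsimps field_simps)
  next
    case 2 then show ?thesis using e by (intro exI[of _ "py a / py b"]) (auto simp: vsimps field_simps)
  next
    case 3 then show ?thesis using e by (intro exI[of _ "pz a / pz b"]) (auto simp: vsimps field_simps)
  qed
qed

lemma cross_indep:
  fixes P R :: "'a::field pt"
  assumes "cross P R \<noteq> (0,0,0)" shows "indep P R"
  unfolding indep_def
proof (intro allI impI)
  fix a b assume h: "addp (scal a P) (scal b R) = (0,0,0)"
  have "cross (addp (scal a P) (scal b R)) R = scal a (cross P R)"
    by (simp add: cross_add1 cross_scal1 cross_self) (simp add: vsimps)
  then have "scal a (cross P R) = (0,0,0)" using h by (simp add: vsimps)
  then have a: "a = 0" using assms by (auto simp: vsimps)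
  have "cross P (addp (scal a P) (scal b R)) = scal b (cross P R)"
    by (simp add: cross_add2 cross_scal2 cross_self) (simp add: vsimps)
  then have "scal b (cross P R) = (0,0,0)" using h by (simp add: vsimps)
  then have "b = 0" using assms by (auto simp: vsimps)
  with a show "a = 0 \<and> b = 0" by simp
qed

lemma indep_cross:
  fixes P R :: "'a::field pt"
  assumes "indep P R" shows "cross P R \<noteq> (0,0,0)"
proof
  assume c: "cross P R = (0,0,0)"
  show False
  proof (cases "R = (0,0,0)")
    case True
    then have "addp (scal 0 P) (scal 1 R) = (0,0,0)" by (simp add: vsimps)
    then show False using assms unfolding indep_def by force
  next
    case False
    then obtain s where "P = scal s R" using par_scal c by blast
    then have "addp (scal 1 P) (scal (-s) R) = (0,0,0)" by (simp add: vsimps)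
    then show False using assms unfolding indep_def by force
  qed
qed

lemma perp2: "dot u a = 0 \<Longrightarrow> dot u b = 0 \<Longrightarrow> cross (cross a b) u = (0,0,0)"
  by (simp add: cross_cross dot_comm) (simp add: vsimps)

lemma perp_par:
  fixes L a b :: "'a::field pt"
  assumes "L \<noteq> (0,0,0)" "dot L a = 0" "dot L b = 0"
  shows "\<exists>s. cross a b = scal s L"
  using par_scal[OF assms(1) perp2[OF assms(2,3)]] .

lemma det_perp:
  fixes L a b u :: "'a::field pt"
  assumes "L \<noteq> (0,0,0)" "dot L a = 0" "dot L b = 0" "dot L u = 0"
  shows "det a b u = 0"
proof -
  obtain s where s: "cross a b = scal s L" using perp_par assms by blast
  have "det a b u = dot u (cross a b)" by (simp add: vsimps algebra_simps)
  also have "\<dots> = s * dot u L" by (simp add: s dot_scal2)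
  also have "\<dots> = 0" using assms(4) by (simp add: dot_comm)
  finally show ?thesis .
qed

lemma exists_e:
  fixes a b :: "'a::field pt"
  assumes "cross a b \<noteq> (0,0,0)"
  shows "\<exists>w. det a b w \<noteq> 0"
proof -
  have "det a b (1,0,0) = px (cross a b)" "det a b (0,1,0) = py (cross a b)" "det a b (0,0,1) = pz (cross a b)"
    by (simp_all add: vsimps algebra_simps)
  then show ?thesis using assms by (metis zero_pt)
qed

lemma span2:
  fixes a b u :: "'a::field pt"
  assumes "cross a b \<noteq> (0,0,0)" "det a b u = 0"
  shows "\<exists>s t. u = addp (scal s a) (scal t b)"
proof -
  obtain w where w: "det a b w \<noteq> 0" using exists_e assms by blast
  have "scal (det a b w) u = addp (addp (scal (det u b w) a) (scal (det a u w) b)) (scal (det a b u) w)"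
    by (rule cramer)
  then have "scal (det a b w) u = addp (scal (det u b w) a) (scal (det a u w) b)" using assms(2) by (simp add: vsimps)
  from scal_cancel[OF w this] show ?thesis by (simp add: scal_addp scal_scal) blast
qed

lemma span3:
  fixes a b c u :: "'a::field pt"
  assumes "det a b c \<noteq> 0"
  shows "u = addp (addp (scal (det u b c / det a b c) a) (scal (det a u c / det a b c) b)) (scal (det a b u / det a b c) c)"
proof -
  have "scal (det a b c) u = addp (addp (scal (det u b c) a) (scal (det a u c) b)) (scal (det a b u) c)"
    by (rule cramer)
  from scal_cancel[OF assms this] show ?thesis by (simp add: scal_addp scal_scal field_simps)
qed

lemma dual_cramer: "scal (det a b m) u = addp (addp (scal (dot a u) (cross b m)) (scal (dot b u) (cross m a))) (scal (dot m u) (cross a b))"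
  by (simp add: vsimps algebra_simps)

lemma determ:
  fixes a b m u v :: "'a::field pt"
  assumes "det a b m \<noteq> 0" "dot a u = dot a v" "dot b u = dot b v" "dot m u = dot m v"
  shows "u = v"
proof -
  have "scal (det a b m) u = scal (det a b m) v" using dual_cramer[of a b m u] dual_cramer[of a b m v] assms by simp
  then show ?thesis using assms(1) by (auto simp: vsimps)
qed

lemma line_basis:
  fixes L :: "'a::field pt"
  assumes "L \<noteq> (0,0,0)"
  shows "\<exists>P R. dot L P = 0 \<and> dot L R = 0 \<and> cross P R \<noteq> (0,0,0)"
proof -
  consider "px L \<noteq> 0" | "py L \<noteq> 0" | "pz L \<noteq> 0" using assms by (auto simp: pt_eq_iff)
  then show ?thesis
  proof cases
    case 1 then show ?thesis
      by (intro exI[of _ "(- py L, px L, 0)"] exI[of _ "(- pz L, 0, px L)"]) (auto simp: vsimps algebra_simps)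
  next
    case 2 then show ?thesis
      by (intro exI[of _ "(py L, - px L, 0)"] exI[of _ "(0, - pz L, py L)"]) (auto simp: vsimps algebra_simps)
  next
    case 3 then show ?thesis
      by (intro exI[of _ "(pz L, 0, - px L)"] exI[of _ "(0, pz L, - py L)"]) (auto simp: vsimps algebra_simps)
  qed
qed

lemma par_trans:
  fixes a b c :: "'a::field pt"
  assumes "b \<noteq> (0,0,0)" "cross a b = (0,0,0)" "cross b c = (0,0,0)"
  shows "cross a c = (0,0,0)"
proof -
  obtain s where s: "a = scal s b" using par_scal assms by blast
  have "cross c b = (0,0,0)" using assms(3) cross_anti[of c b] by (simp add: vsimps)
  then obtain t where t: "c = scal t b" using par_scal assms by blast
  show ?thesis by (simp add: s t cross_scal1 cross_scal2 cross_self vsimps)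
qed


lemma mons3: "mons 3 = {(3,0,0),(0,3,0),(0,0,3),(2,1,0),(2,0,1),(1,2,0),(0,2,1),(1,0,2),(0,1,2),(1,1,1)}" (is "_ = ?R")
proof (rule subset_antisym)
  have A: "(a,b,c) \<in> ?R" if h: "a + b + c = 3" for a b c :: nat
  proof -
    have c: "c = 3 - a - b" using h by auto
    have "a \<le> 3" "b \<le> 3" using h by auto
    then have "a = 0 \<or> a = 1 \<or> a = 2 \<or> a = 3" "b = 0 \<or> b = 1 \<or> b = 2 \<or> b = 3" by linarith+
    then show ?thesis using h unfolding c by (elim disjE; simp)
  qed
  show "mons 3 \<subseteq> ?R"
  proof
    fix x assume "x \<in> mons 3"
    then obtain a b c where xe: "x = (a,b,c)" and h: "a+b+c = 3" unfolding mons_def by auto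
    show "x \<in> ?R" unfolding xe by (rule A[OF h])
  qed
  show "?R \<subseteq> mons 3" unfolding mons_def by (simp only: insert_subset mem_Collect_eq prod.case) simp
qed

lemma mons4: "mons 4 = {(4,0,0),(0,4,0),(0,0,4),(3,1,0),(3,0,1),(1,3,0),(0,3,1),(1,0,3),(0,1,3),
  (2,2,0),(2,0,2),(0,2,2),(2,1,1),(1,2,1),(1,1,2)}" (is "_ = ?R")
proof (rule subset_antisym)
  have A: "(a,b,c) \<in> ?R" if h: "a + b + c = 4" for a b c :: nat
  proof -
    have c: "c = 4 - a - b" using h by auto
    have "a \<le> 4" "b \<le> 4" using h by auto
    then have "a = 0 \<or> a = 1 \<or> a = 2 \<or> a = 3 \<or> a = 4" "b = 0 \<or> b = 1 \<or> b = 2 \<or> b = 3 \<or> b = 4" by linarith+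
    then show ?thesis using h unfolding c by (elim disjE; simp)
  qed
  show "mons 4 \<subseteq> ?R"
  proof
    fix x assume "x \<in> mons 4"
    then obtain a b c where xe: "x = (a,b,c)" and h: "a+b+c = 4" unfolding mons_def by auto
    show "x \<in> ?R" unfolding xe by (rule A[OF h])
  qed
  show "?R \<subseteq> mons 4" unfolding mons_def by (simp only: insert_subset mem_Collect_eq prod.case) simp
qed

lemma evf4: "evf F 4 (x,y,z) = F(4,0,0)*x^4 + F(0,4,0)*y^4 + F(0,0,4)*z^4 + F(3,1,0)*x^3*y + F(3,0,1)*x^3*z
  + F(1,3,0)*x*y^3 + F(0,3,1)*y^3*z + F(1,0,3)*x*z^3 + F(0,1,3)*y*z^3 + F(2,2,0)*x^2*y^2 + F(2,0,2)*x^2*z^2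
  + F(0,2,2)*y^2*z^2 + F(2,1,1)*x^2*y*z + F(1,2,1)*x*y^2*z + F(1,1,2)*x*y*z^2"
  by (simp add: mons4 algebra_simps)

lemma evf3: "evf G 3 (x,y,z) = G(3,0,0)*x^3 + G(0,3,0)*y^3 + G(0,0,3)*z^3 + G(2,1,0)*x^2*y + G(2,0,1)*x^2*z
  + G(1,2,0)*x*y^2 + G(0,2,1)*y^2*z + G(1,0,2)*x*z^2 + G(0,1,2)*y*z^2 + G(1,1,1)*x*y*z"
  by (simp add: mons3 algebra_simps)

definition Wf :: "(nat \<times> nat \<times> nat \<Rightarrow> 'a::comm_ring_1) \<Rightarrow> 'a pt \<Rightarrow> 'a pt" where
  "Wf F X = (F(2,1,1)*px X^2 + F(0,3,1)*py X^2 + F(0,1,3)*pz X^2,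
             F(3,0,1)*px X^2 + F(1,2,1)*py X^2 + F(1,0,3)*pz X^2,
             F(3,1,0)*px X^2 + F(1,3,0)*py X^2 + F(1,1,2)*pz X^2)"
definition NT :: "(nat \<times> nat \<times> nat \<Rightarrow> 'a::comm_ring_1) \<Rightarrow> 'a pt \<Rightarrow> 'a pt" where
  "NT F l = (F(2,1,1)*px l + F(3,0,1)*py l + F(3,1,0)*pz l,
             F(0,3,1)*px l + F(1,2,1)*py l + F(1,3,0)*pz l,
             F(0,1,3)*px l + F(1,0,3)*py l + F(1,1,2)*pz l)"
definition mv :: "'a::comm_ring_1 pt \<Rightarrow> 'a pt" where
  "mv X = (py X * pz X, px X * pz X, px X * py X)"
definition EvQ :: "(nat \<times> nat \<times> nat \<Rightarrow> 'a::comm_ring_1) \<Rightarrow> 'a pt \<Rightarrow> 'a" where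
  "EvQ F u = F(4,0,0)*px u^2 + F(0,4,0)*py u^2 + F(0,0,4)*pz u^2 + F(2,2,0)*px u*py u
     + F(2,0,2)*px u*pz u + F(0,2,2)*py u*pz u"

lemmas fsimps = Wf_def NT_def mv_def EvQ_def

lemma evf_struct: "evf F 4 X = EvQ F (sq X) + dot (mv X) (Wf F X)"
  proof -
  obtain x y z where X: "X = (x,y,z)" by (cases X rule: prod_cases3)
  show ?thesis unfolding X evf4 by (simp add:  fsimps vsimps algebra_simps power2_eq_square power3_eq_cube power4_eq_xxxx)
qed

lemma dot_W: "dot l (Wf F X) = dot (NT F l) (sq X)"
  by (simp add: fsimps vsimps algebra_simps)

lemma W_add: "(2::'a::comm_ring_1) = 0 \<Longrightarrow> Wf F (addp X Y) = addp (Wf F X) (Wf (F::_\<Rightarrow>'a) Y)"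
  by (simp add: fsimps vsimps c2_sq_add algebra_simps)
lemma W_scal: "Wf F (scal c X) = scal (c^2) (Wf F X)"
  by (simp add: fsimps vsimps power_mult_distrib algebra_simps)
lemma NT_add: "NT F (addp X Y) = addp (NT F X) (NT F Y)"
  by (simp add: fsimps vsimps algebra_simps)
lemma NT_scal: "NT F (scal c X) = scal c (NT F X)"
  by (simp add: fsimps vsimps algebra_simps)
lemma W_sq: "Wf F X = (dot (F(2,1,1), F(0,3,1), F(0,1,3)) (sq X), dot (F(3,0,1), F(1,2,1), F(1,0,3)) (sq X),
   dot (F(3,1,0), F(1,3,0), F(1,1,2)) (sq X))"
  by (simp add: fsimps vsimps)

lemma of_nat_c2: "(2::'a::comm_ring_1) = 0 \<Longrightarrow> (of_nat n :: 'a) = (if even n then 0 else 1)"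
proof (induction n)
  case 0 then show ?case by simp
next
  case (Suc n) then show ?case by (auto simp: c2_double)
qed

lemma grad_x: assumes c2: "(2::'a::comm_ring_1) = 0" shows "evf (dX F) 3 X = px (cross X (Wf (F::_\<Rightarrow>'a) X))"
  proof -
  obtain x y z where X: "X = (x,y,z)" by (cases X rule: prod_cases3)
  show ?thesis unfolding X evf3 by (simp add: c2 c2_num3[OF c2] c2_num4[OF c2] of_nat_c2[OF c2] fsimps vsimps c2_minus algebra_simps power2_eq_square power3_eq_cube)
qed
lemma grad_y: assumes c2: "(2::'a::comm_ring_1) = 0" shows "evf (dY F) 3 X = py (cross X (Wf (F::_\<Rightarrow>'a) X))"
  proof -
  obtain x y z where X: "X = (x,y,z)" by (cases X rule: prod_cases3)
  show ?thesis unfolding X evf3 by (simp add: c2 c2_num3[OF c2] c2_num4[OF c2] of_nat_c2[OF c2] fsimps vsimps c2_minus algebra_simps power2_eq_square power3_eq_cube)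
qed
lemma grad_z: assumes c2: "(2::'a::comm_ring_1) = 0" shows "evf (dZ F) 3 X = pz (cross X (Wf (F::_\<Rightarrow>'a) X))"
  proof -
  obtain x y z where X: "X = (x,y,z)" by (cases X rule: prod_cases3)
  show ?thesis unfolding X evf3 by (simp add: c2 c2_num3[OF c2] c2_num4[OF c2] of_nat_c2[OF c2] fsimps vsimps c2_minus algebra_simps power2_eq_square power3_eq_cube)
qed


lemma poly_restr: "poly (restr F P R) t = evf F 4 (addp P (scal t R))"
proof -
  obtain p1 p2 p3 where P: "P = (p1,p2,p3)" by (cases P rule: prod_cases3)
  obtain r1 r2 r3 where R: "R = (r1,r2,r3)" by (cases R rule: prod_cases3)
  show ?thesis unfolding P R
    by (simp add: poly_sum case_prod_beta algebra_simps)
qed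

lemma EvQ_quad: "EvQ F (addp u (scal s v)) = EvQ F u + s * (EvQ F (addp u v) - EvQ F u - EvQ F v) + s^2 * EvQ F v"
  by (simp add: fsimps vsimps algebra_simps power2_eq_square)

lemma mv_add: assumes c2: "(2::'a::comm_ring_1) = 0"
  shows "mv (addp P (scal t R)) = addp (addp (mv P) (scal t (cross P R))) (scal (t^2) (mv (R::'a pt)))"
  by (simp add: fsimps vsimps c2_minus[OF c2] algebra_simps power2_eq_square)

definition c2f :: "(nat \<times> nat \<times> nat \<Rightarrow> 'a::comm_ring_1) \<Rightarrow> 'a pt \<Rightarrow> 'a pt \<Rightarrow> 'a" where
  "c2f F P R = EvQ F (addp (sq P) (sq R)) - EvQ F (sq P) - EvQ F (sq R) + dot (mv P) (Wf F R) + dot (mv R) (Wf F P)"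

lemma evf_line: assumes c2: "(2::'a::comm_ring_1) = 0"
  shows "evf F 4 (addp P (scal t R)) = evf F 4 P + dot (cross P R) (Wf F P) * t + c2f F P R * t^2
     + dot (cross P R) (Wf F R) * t^3 + evf F 4 R * (t::'a)^4"
proof -
  have s: "sq (addp P (scal t R)) = addp (sq P) (scal (t^2) (sq R))"
    by (simp add: vsq_add[OF c2] vsq_scal)
  have w: "Wf F (addp P (scal t R)) = addp (Wf F P) (scal (t^2) (Wf F R))"
    by (simp add: W_add[OF c2] W_scal)
  show ?thesis
    unfolding evf_struct[of F "addp P (scal t R)"] evf_struct[of F P] evf_struct[of F R] s w mv_add[OF c2]
      EvQ_quad c2f_def
    by (simp add: dot_add1 dot_add2 dot_scal1 dot_scal2 algebra_simps power2_eq_square power3_eq_cube power4_eq_xxxx)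
qed

definition rpoly :: "(nat \<times> nat \<times> nat \<Rightarrow> 'a::comm_ring_1) \<Rightarrow> 'a pt \<Rightarrow> 'a pt \<Rightarrow> 'a poly" where
  "rpoly F P R = [:evf F 4 P, dot (cross P R) (Wf F P), c2f F P R, dot (cross P R) (Wf F R), evf F 4 R:]"

lemma poly_rpoly: "poly (rpoly F P R) t = evf F 4 P + dot (cross P R) (Wf F P) * t + c2f F P R * t^2
     + dot (cross P R) (Wf F R) * t^3 + evf F 4 R * t^4"
  by (simp add: rpoly_def algebra_simps power2_eq_square power3_eq_cube power4_eq_xxxx)

lemma closed_infinite:
  assumes cl: "alg_closed TYPE('a::field)"
  shows "infinite (UNIV :: 'a set)"
proof
  assume fin: "finite (UNIV :: 'a set)"
  define q :: "'a poly" where "q = (\<Prod>a\<in>UNIV. [:-a, 1:])"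
  have dq: "degree q = card (UNIV :: 'a set)"
    unfolding q_def by (subst degree_prod_eq_sum_degree) auto
  have "card (UNIV :: 'a set) > 0" using fin by (simp add: card_gt_0_iff)
  then have "degree (q + 1) > 0" using dq by (subst degree_add_eq_left) auto
  then obtain x where "poly (q + 1) x = 0" using cl unfolding alg_closed_def by blast
  moreover have "poly q x = 0" unfolding q_def poly_prod
    by (rule prod_zero) (use fin in auto)
  ultimately show False by simp
qed

lemma restr_eq:
  assumes cl: "alg_closed TYPE('a::field)" and c2: "(2::'a) = 0"
  shows "restr F P R = rpoly F P (R::'a pt)"
proof -
  have "poly (restr F P R - rpoly F P R) t = 0" for t
    by (simp add: poly_restr poly_rpoly evf_line[OF c2])
  then have "{t. poly (restr F P R - rpoly F P R) t = 0} = UNIV" by auto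
  then have "restr F P R - rpoly F P R = 0" using poly_roots_finite closed_infinite[OF cl] by metis
  then show ?thesis by simp
qed

lemma coeff_rpoly:
  "coeff (rpoly F P R) 0 = evf F 4 P" "coeff (rpoly F P R) 1 = dot (cross P R) (Wf F P)"
  "coeff (rpoly F P R) 2 = c2f F P R" "coeff (rpoly F P R) 3 = dot (cross P R) (Wf F R)"
  "coeff (rpoly F P R) 4 = evf F 4 R"
  by (simp_all add: rpoly_def numeral_eq_Suc)

lemma order_ge_iff:
  fixes p :: "'a::idom poly"
  assumes "p \<noteq> 0" shows "n \<le> order 0 p \<longleftrightarrow> (\<forall>k<n. coeff p k = 0)"
  using monom_1_dvd_iff[OF assms] monom_1_dvd_iff' by blast


definition eig :: "(nat \<times> nat \<times> nat \<Rightarrow> 'a::field) \<Rightarrow> 'a pt \<Rightarrow> bool" where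
  "eig F l \<longleftrightarrow> l \<noteq> (0,0,0) \<and> (\<exists>\<mu>. NT F l = scal \<mu> (sq l))"

lemma evf_hom: "evf F 4 (scal c X) = c^4 * evf F 4 X"
proof -
  obtain x y z where X: "X = (x,y,z)" by (cases X rule: prod_cases3)
  show ?thesis unfolding X scal.simps evf4 by (simp add: algebra_simps power_mult_distrib power2_eq_square power3_eq_cube power4_eq_xxxx)
qed

lemma sqrt_ex: assumes cl: "alg_closed TYPE('a::field)" shows "\<exists>b::'a. b^2 = a"
proof -
  have "degree [:-a, 0, 1:] > 0" by simp
  then obtain b where "poly [:-a, 0, 1:] b = 0" using cl unfolding alg_closed_def by blast
  then show ?thesis by (auto simp: power2_eq_square algebra_simps)
qed

lemma cross_sq: assumes c2: "(2::'a::comm_ring_1) = 0" shows "cross (sq a) (sq b) = sq (cross a (b::'a pt))"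
  by (simp add: vsimps c2_minus[OF c2] power_mult_distrib c2_sq_add[OF c2])

lemma sq_nz: "(a::'a::idom pt) \<noteq> (0,0,0) \<Longrightarrow> sq a \<noteq> (0,0,0)"
  by (auto simp: vsimps)

lemma perp_cross_par:
  fixes u a b :: "'a::field pt"
  assumes "dot u a = 0" "dot u b = 0" "cross a b \<noteq> (0,0,0)"
  shows "\<exists>m. u = scal m (cross a b)"
proof -
  have "cross u (cross a b) = (0,0,0)" using perp2[OF assms(1,2)] cross_anti[of u "cross a b"] by (simp add: vsimps)
  then show ?thesis using par_scal[OF assms(3)] by blast
qed

lemma eig_dotW:
  fixes F :: "_ \<Rightarrow> 'a::field"
  assumes c2: "(2::'a) = 0" and e: "eig F L" and U: "dot L U = 0"
  shows "dot L (Wf F U) = 0"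
proof -
  obtain \<mu> where mu: "NT F L = scal \<mu> (sq L)" using e unfolding eig_def by blast
  show ?thesis unfolding dot_W mu dot_scal1 dot_sq[OF c2] U by simp
qed

lemma eig_from:
  fixes F :: "_ \<Rightarrow> 'a::field"
  assumes c2: "(2::'a) = 0" and L: "L \<noteq> (0,0,0)" "dot L P = 0" "dot L R = 0"
    and cPR: "cross P R \<noteq> (0,0,0)"
    and h1: "dot (cross P R) (Wf F P) = 0" and h2: "dot (cross P R) (Wf F R) = 0"
  shows "eig F L"
proof -
  obtain s where s: "cross P R = scal s L" using perp_par[OF L] by blast
  have s0: "s \<noteq> 0" using cPR s by (auto simp: vsimps)
  have "dot L (Wf F P) = 0" "dot L (Wf F R) = 0" using h1 h2 s0 unfolding s dot_scal1 by auto
  then have "dot (NT F L) (sq P) = 0" "dot (NT F L) (sq R) = 0" by (simp_all add: dot_W)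
  moreover have "cross (sq P) (sq R) \<noteq> (0,0,0)" using cross_sq[OF c2] sq_nz[OF cPR] by simp
  ultimately obtain m where "NT F L = scal m (cross (sq P) (sq R))" using perp_cross_par by blast
  also have "\<dots> = scal (m * s^2) (sq L)" unfolding cross_sq[OF c2] s vsq_scal scal_scal ..
  finally show ?thesis using L unfolding eig_def by blast
qed

lemma rpoly_restr:
  assumes cl: "alg_closed TYPE('a::field)" and c2: "(2::'a) = 0"
  shows "imult (F::_\<Rightarrow>'a) P R = order 0 (rpoly F P R)"
  unfolding imult_def restr_eq[OF cl c2] ..

lemma poly_rpoly': assumes c2: "(2::'a::comm_ring_1) = 0"
  shows "poly (rpoly F P R) t = evf F 4 (addp P (scal (t::'a) R))"
  by (simp add: poly_rpoly evf_line[OF c2])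


lemma cross_anti_nz: "cross U V \<noteq> (0,0,0) \<Longrightarrow> cross V U \<noteq> ((0,0,0)::'a::comm_ring_1 pt)"
  by (auto simp: vsimps algebra_simps)

lemma Fzero:
  fixes F :: "_ \<Rightarrow> 'a::field"
  assumes c2: "(2::'a) = 0" and L: "L \<noteq> (0,0,0)" "dot L P = 0" "dot L R = 0"
    and cPR: "cross P R \<noteq> (0,0,0)" and Z: "dot L Z = 0" and r: "rpoly F P R = 0"
  shows "evf F 4 Z = 0"
proof -
  have "det P R Z = 0" using det_perp[OF L Z] .
  then obtain s t where Zst: "Z = addp (scal s P) (scal t R)" using span2[OF cPR] by blast
  show ?thesis
  proof (cases "s = 0")
    case True
    then have "Z = scal t R" using Zst by (simp add: vsimps)
    moreover have "evf F 4 R = 0" using coeff_rpoly(5)[of F P R] r by simp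
    ultimately show ?thesis by (simp add: evf_hom)
  next
    case False
    then have "Z = scal s (addp P (scal (t/s) R))" using Zst by (simp add: vsimps field_simps)
    moreover have "evf F 4 (addp P (scal (t/s) R)) = 0" using poly_rpoly'[OF c2, of F P R "t/s"] r by simp
    ultimately show ?thesis by (simp add: evf_hom)
  qed
qed

lemma coeff13:
  fixes F :: "_ \<Rightarrow> 'a::field"
  assumes c2: "(2::'a) = 0" and e: "eig F L" and L: "L \<noteq> (0,0,0)" "dot L U = 0" "dot L V = 0"
  shows "dot (cross U V) (Wf F U) = 0" "dot (cross U V) (Wf F V) = 0"
proof -
  obtain s where s: "cross U V = scal s L" using perp_par[OF L] by blast
  show "dot (cross U V) (Wf F U) = 0" "dot (cross U V) (Wf F V) = 0"
    unfolding s dot_scal1 using eig_dotW[OF c2 e] L by auto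
qed

lemma imult_ge:
  fixes F :: "_ \<Rightarrow> 'a::field"
  assumes cl: "alg_closed TYPE('a)" and c2: "(2::'a) = 0" and e: "eig F L"
    and L: "L \<noteq> (0,0,0)" "dot L U = 0" "dot L V = 0" and cUV: "cross U V \<noteq> (0,0,0)"
    and FU: "evf F 4 U = 0" and nc: "\<exists>Z. dot L Z = 0 \<and> evf F 4 Z \<noteq> 0"
  shows "2 \<le> imult F U V" and "c2f F U V = 0 \<Longrightarrow> 4 \<le> imult F U V"
proof -
  have nz: "rpoly F U V \<noteq> 0" using Fzero[OF c2 L cUV] nc by blast
  have c: "coeff (rpoly F U V) 0 = 0" "coeff (rpoly F U V) 1 = 0" "coeff (rpoly F U V) 3 = 0"
    using coeff13[OF c2 e L] FU by (simp_all add: rpoly_def numeral_eq_Suc)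
  have "\<forall>k<2. coeff (rpoly F U V) k = 0" using c by (auto simp: less_Suc_eq numeral_eq_Suc)
  then show "2 \<le> imult F U V" unfolding rpoly_restr[OF cl c2] using order_ge_iff[OF nz] by blast
  assume "c2f F U V = 0"
  then have "coeff (rpoly F U V) 2 = 0" by (simp add: coeff_rpoly)
  then have "\<forall>k<4. coeff (rpoly F U V) k = 0" using c by (auto simp: less_Suc_eq numeral_eq_Suc)
  then show "4 \<le> imult F U V" unfolding rpoly_restr[OF cl c2] using order_ge_iff[OF nz] by blast
qed

lemma two_point:
  fixes F :: "_ \<Rightarrow> 'a::field"
  assumes cl: "alg_closed TYPE('a)" and c2: "(2::'a) = 0" and e: "eig F L"
    and L: "L \<noteq> (0,0,0)" "dot L U = 0" "dot L V = 0" and cUV: "cross U V \<noteq> (0,0,0)"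
    and FU: "evf F 4 U = 0" and FV: "evf F 4 V = 0" and nc: "\<exists>Z. dot L Z = 0 \<and> evf F 4 Z \<noteq> 0"
  shows "is_bitangent F L"
proof -
  have cVU: "cross V U \<noteq> (0,0,0)" using cross_anti_nz[OF cUV] .
  have "2 \<le> imult F U V" using imult_ge(1)[OF cl c2 e L cUV FU nc] .
  moreover have "2 \<le> imult F V U" using imult_ge(1)[OF cl c2 e L(1,3,2) cVU FV nc] .
  ultimately show ?thesis unfolding is_bitangent_def on_line_dot using L nc cross_indep[OF cUV] by blast
qed

lemma root_ex: assumes cl: "alg_closed TYPE('a::field)" and "degree (p::'a poly) > 0" shows "\<exists>x. poly p x = 0"
  using assms unfolding alg_closed_def by blast

lemma eig_bitangent:
  fixes F :: "_ \<Rightarrow> 'a::field"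
  assumes cl: "alg_closed TYPE('a)" and c2: "(2::'a) = 0" and e: "eig F L"
    and nc: "\<exists>Z. dot L Z = 0 \<and> evf F 4 Z \<noteq> 0"
  shows "is_bitangent F L"
proof -
  have L0: "L \<noteq> (0,0,0)" using e unfolding eig_def by blast
  obtain P R where PR: "dot L P = 0" "dot L R = 0" "cross P R \<noteq> (0,0,0)" using line_basis[OF L0] by blast
  obtain R0 P1 where RP: "dot L R0 = 0" "dot L P1 = 0" "cross R0 P1 \<noteq> (0,0,0)" "evf F 4 R0 = 0"
  proof (cases "evf F 4 R = 0")
    case True
    have "cross R P \<noteq> (0,0,0)" using cross_anti_nz[OF PR(3)] .
    then show ?thesis using that[of R P] PR True by blast
  next
    case False
    have "coeff (rpoly F P R) 4 \<noteq> 0" using False by (simp add: coeff_rpoly)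
    then have "degree (rpoly F P R) > 0" using le_degree[of "rpoly F P R" 4] by linarith
    then obtain t0 where "poly (rpoly F P R) t0 = 0" using root_ex[OF cl] by blast
    then have F0: "evf F 4 (addp P (scal t0 R)) = 0" using poly_rpoly'[OF c2] by metis
    have "dot L (addp P (scal t0 R)) = 0" using PR by (simp add: dot_add2 dot_scal2)
    moreover have "cross (addp P (scal t0 R)) R = cross P R"
      by (simp add: cross_add1 cross_scal1 cross_self) (simp add: vsimps)
    ultimately show ?thesis using that[of "addp P (scal t0 R)" R] PR F0 by auto
  qed
  show ?thesis
  proof (cases "evf F 4 P1 = 0")
    case True
    show ?thesis using two_point[OF cl c2 e L0 RP(1,2,3,4) True nc] .
  next
    case FP1: False
    show ?thesis
    proof (cases "c2f F R0 P1 = 0")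
      case True
      have "4 \<le> imult F R0 P1" using imult_ge(2)[OF cl c2 e L0 RP(1,2,3,4) nc True] .
      then show ?thesis unfolding is_bitangent_def on_line_dot using L0 nc RP cross_indep[OF RP(3)] by blast
    next
      case c2nz: False
      obtain l where l: "l^2 = c2f F R0 P1 / evf F 4 P1" using sqrt_ex[OF cl] by blast
      have l0: "l \<noteq> 0" using l c2nz FP1 by auto
      define P' where "P' = addp R0 (scal l P1)"
      have "evf F 4 P' = evf F 4 R0 + 0 * l + c2f F R0 P1 * l^2 + 0 * l^3 + evf F 4 P1 * l^4"
        unfolding P'_def evf_line[OF c2] coeff13[OF c2 e L0 RP(1,2)] by simp
      also have "\<dots> = c2f F R0 P1 * l^2 + evf F 4 P1 * (l^2)^2" using RP(4) by (simp add: power_mult[symmetric])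
      also have "\<dots> = 0" unfolding l using FP1 by (simp add: power2_eq_square field_simps c2_double[OF c2])
      finally have FP': "evf F 4 P' = 0" .
      have dP': "dot L P' = 0" unfolding P'_def using RP by (simp add: dot_add2 dot_scal2)
      have "cross R0 P' = scal l (cross R0 P1)" unfolding P'_def
        by (simp add: cross_add2 cross_scal2 cross_self) (simp add: vsimps)
      then have cP': "cross R0 P' \<noteq> (0,0,0)" using l0 RP(3) by (auto simp: vsimps)
      show ?thesis using two_point[OF cl c2 e L0 RP(1) dP' cP' RP(4) FP' nc] .
    qed
  qed
qed


lemma bitangent_eig:
  fixes F :: "_ \<Rightarrow> 'a::field"
  assumes cl: "alg_closed TYPE('a)" and c2: "(2::'a) = 0" and b: "is_bitangent F L"
  shows "eig F L"
proof -
  have L0: "L \<noteq> (0,0,0)" and nc: "\<exists>Z. dot L Z = 0 \<and> evf F 4 Z \<noteq> 0"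
    using b unfolding is_bitangent_def on_line_dot by auto
  have nzp: "rpoly F P R \<noteq> 0" if "dot L P = 0" "dot L R = 0" "cross P R \<noteq> (0,0,0)" for P R
    using Fzero[OF c2 L0 that] nc by blast
  from b consider
     (two) P R where "dot L P = 0" "dot L R = 0" "indep P R" "2 \<le> imult F P R" "2 \<le> imult F R P"
   | (four) P R where "dot L P = 0" "dot L R = 0" "indep P R" "4 \<le> imult F P R"
    unfolding is_bitangent_def on_line_dot by blast
  then show ?thesis
  proof cases
    case two
    have cPR: "cross P R \<noteq> (0,0,0)" using indep_cross[OF two(3)] .
    have cRP: "cross R P \<noteq> (0,0,0)" using cross_anti_nz[OF cPR] .
    have "\<forall>k<2. coeff (rpoly F P R) k = 0"
      using two(4) order_ge_iff[OF nzp[OF two(1,2) cPR]] unfolding rpoly_restr[OF cl c2] by blast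
    then have "coeff (rpoly F P R) 1 = 0" by auto
    then have h1: "dot (cross P R) (Wf F P) = 0" by (metis coeff_rpoly(2))
    have "\<forall>k<2. coeff (rpoly F R P) k = 0"
      using two(5) order_ge_iff[OF nzp[OF two(2,1) cRP]] unfolding rpoly_restr[OF cl c2] by blast
    then have "coeff (rpoly F R P) 1 = 0" by auto
    then have "dot (cross R P) (Wf F R) = 0" by (metis coeff_rpoly(2))
    then have h2: "dot (cross P R) (Wf F R) = 0" unfolding cross_anti[of R P] dot_scal1 by simp
    show ?thesis using eig_from[OF c2 L0 two(1,2) cPR h1 h2] .
  next
    case four
    have cPR: "cross P R \<noteq> (0,0,0)" using indep_cross[OF four(3)] .
    have "\<forall>k<4. coeff (rpoly F P R) k = 0"
      using four(4) order_ge_iff[OF nzp[OF four(1,2) cPR]] unfolding rpoly_restr[OF cl c2] by blast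
    then have "coeff (rpoly F P R) 1 = 0" "coeff (rpoly F P R) 3 = 0" by auto
    then have h1: "dot (cross P R) (Wf F P) = 0" and h2: "dot (cross P R) (Wf F R) = 0"
      by (metis coeff_rpoly(2,4))+
    show ?thesis using eig_from[OF c2 L0 four(1,2) cPR h1 h2] .
  qed
qed

lemma cross_comb: "cross (addp (scal s P) (scal t R)) (addp (scal u P) (scal v R)) = scal (s*v - t*u) (cross P R)"
  by (simp add: vsimps algebra_simps)

lemma eig_noncomp:
  fixes F :: "_ \<Rightarrow> 'a::field"
  assumes cl: "alg_closed TYPE('a)" and c2: "(2::'a) = 0" and ns: "nonsingular_quartic F" and e: "eig F L"
  shows "\<exists>Z. dot L Z = 0 \<and> evf F 4 Z \<noteq> 0"
proof (rule ccontr)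
  assume "\<not> ?thesis"
  then have z: "\<And>Z. dot L Z = 0 \<Longrightarrow> evf F 4 Z = 0" by blast
  have L0: "L \<noteq> (0,0,0)" using e unfolding eig_def by blast
  obtain P R where PR: "dot L P = 0" "dot L R = 0" "cross P R \<noteq> (0,0,0)" using line_basis[OF L0] by blast
  have "det P R (Wf F P) = 0" using det_perp[OF L0 PR(1,2) eig_dotW[OF c2 e PR(1)]] .
  then obtain \<alpha> \<beta> where WP: "Wf F P = addp (scal \<alpha> P) (scal \<beta> R)" using span2[OF PR(3)] by blast
  have "det P R (Wf F R) = 0" using det_perp[OF L0 PR(1,2) eig_dotW[OF c2 e PR(2)]] .
  then obtain \<gamma> \<delta> where WR: "Wf F R = addp (scal \<gamma> P) (scal \<delta> R)" using span2[OF PR(3)] by blast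
  obtain s t where st: "s \<noteq> 0 \<or> t \<noteq> 0" "s*(s^2*\<beta> + t^2*\<delta>) = t*(s^2*\<alpha> + t^2*\<gamma>)"
  proof (cases "\<beta> = 0")
    case True then show ?thesis using that[of 1 0] by simp
  next
    case False
    have "0 < degree [:-\<gamma>, \<delta>, -\<alpha>, \<beta>:]" using False by simp
    then obtain s0 where "poly [:-\<gamma>, \<delta>, -\<alpha>, \<beta>:] s0 = 0" using root_ex[OF cl] by blast
    then have "s0*(s0^2*\<beta> + 1^2*\<delta>) = 1*(s0^2*\<alpha> + 1^2*\<gamma>)"
      by (simp add: algebra_simps power2_eq_square)
    then show ?thesis using that[of s0 1] by simp
  qed
  define A where "A = addp (scal s P) (scal t R)"
  have A0: "A \<noteq> (0,0,0)" using cross_indep[OF PR(3)] st(1) unfolding indep_def A_def by blast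
  have "Wf F A = addp (scal (s^2) (Wf F P)) (scal (t^2) (Wf F R))"
    unfolding A_def by (simp add: W_add[OF c2] W_scal)
  also have "\<dots> = addp (scal (s^2*\<alpha> + t^2*\<gamma>) P) (scal (s^2*\<beta> + t^2*\<delta>) R)"
    unfolding WP WR by (simp add: vsimps algebra_simps)
  finally have "cross A (Wf F A) = scal (s*(s^2*\<beta> + t^2*\<delta>) - t*(s^2*\<alpha> + t^2*\<gamma>)) (cross P R)"
    unfolding A_def by (simp add: cross_comb)
  then have cA: "cross A (Wf F A) = (0,0,0)" using st(2) by (simp add: vsimps)
  have "dot L A = 0" unfolding A_def using PR by (simp add: dot_add2 dot_scal2)
  then have "evf F 4 A = 0" using z by blast
  moreover have "evf (dX F) 3 A = 0" "evf (dY F) 3 A = 0" "evf (dZ F) 3 A = 0"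
    using cA by (simp_all add: grad_x[OF c2] grad_y[OF c2] grad_z[OF c2])
  ultimately show False using ns A0 unfolding nonsingular_quartic_def by blast
qed

lemma bitangent_iff:
  fixes F :: "_ \<Rightarrow> 'a::field"
  assumes cl: "alg_closed TYPE('a)" and c2: "(2::'a) = 0" and ns: "nonsingular_quartic F"
  shows "is_bitangent F L \<longleftrightarrow> eig F L"
  using bitangent_eig[OF cl c2] eig_bitangent[OF cl c2] eig_noncomp[OF cl c2 ns] by blast


lemma det_add3: "det a b (addp u v) = det a b u + det a b v" by (simp add: vsimps algebra_simps)
lemma det_scal3: "det a b (scal s u) = s * det a b u" by (simp add: vsimps algebra_simps)
lemma det_self13: "det a b a = 0" by (simp add: vsimps algebra_simps)
lemma det_self23: "det a b b = 0" by (simp add: vsimps algebra_simps)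
lemma det_scal1: "det (scal s a) b c = s * det a b c" by (simp add: vsimps algebra_simps)
lemma det_nz: "det a b v \<noteq> 0 \<Longrightarrow> v \<noteq> ((0,0,0)::'a::comm_ring_1 pt)" by (auto simp: vsimps)

lemma line_set_eq:
  fixes L L' :: "'a::field pt"
  assumes L0: "L \<noteq> (0,0,0)" and L'0: "L' \<noteq> (0,0,0)" and eq: "line_set L = line_set L'"
  shows "cross L L' = (0,0,0)"
proof -
  obtain P R where PR: "dot L P = 0" "dot L R = 0" "cross P R \<noteq> (0,0,0)" using line_basis[OF L0] by blast
  have "P \<in> line_set L" "R \<in> line_set L" using PR unfolding line_set_def on_line_dot by auto
  then have PR': "dot L' P = 0" "dot L' R = 0" using eq unfolding line_set_def on_line_dot by auto
  obtain s where s: "cross P R = scal s L" using perp_par[OF L0 PR(1,2)] by blast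
  obtain s' where s': "cross P R = scal s' L'" using perp_par[OF L'0 PR'] by blast
  have "cross L (cross P R) = (0,0,0)" unfolding s cross_scal2 cross_self by (simp add: vsimps)
  moreover have "cross (cross P R) L' = (0,0,0)" unfolding s' cross_scal1 cross_self by (simp add: vsimps)
  ultimately show ?thesis using par_trans[OF PR(3)] by blast
qed

lemma line_set_eq2:
  fixes L L' :: "'a::field pt"
  assumes L0: "L \<noteq> (0,0,0)" and L'0: "L' \<noteq> (0,0,0)" and c: "cross L L' = (0,0,0)"
  shows "line_set L = line_set L'"
proof -
  obtain s where s: "L = scal s L'" using par_scal[OF L'0 c] by blast
  have "s \<noteq> 0" using L0 s by (auto simp: vsimps)
  then show ?thesis unfolding line_set_def on_line_dot s dot_scal1 by auto
qed

lemma two_lines: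
  fixes F :: "_ \<Rightarrow> 'a::field"
  assumes cl: "alg_closed TYPE('a)" and c2: "(2::'a) = 0" and ns: "nonsingular_quartic F"
    and two: "card (bitangents F) = 2"
  shows "\<exists>l1 l2. eig F l1 \<and> eig F l2 \<and> cross l1 l2 \<noteq> (0,0,0) \<and>
           (\<forall>v. eig F v \<longrightarrow> cross v l1 = (0,0,0) \<or> cross v l2 = (0,0,0))"
proof -
  obtain x y where xy: "bitangents F = {x, y}" "x \<noteq> y" using two card_2_iff by metis
  have "x \<in> bitangents F" "y \<in> bitangents F" using xy by auto
  then obtain l1 l2 where l: "x = line_set l1" "is_bitangent F l1" "y = line_set l2" "is_bitangent F l2"
    unfolding bitangents_def by blast
  have e: "eig F l1" "eig F l2" using l bitangent_iff[OF cl c2 ns] by auto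
  then have nz: "l1 \<noteq> (0,0,0)" "l2 \<noteq> (0,0,0)" unfolding eig_def by auto
  have c: "cross l1 l2 \<noteq> (0,0,0)" using line_set_eq2[OF nz] xy(2) l by auto
  have "cross v l1 = (0,0,0) \<or> cross v l2 = (0,0,0)" if ev: "eig F v" for v
  proof -
    have v0: "v \<noteq> (0,0,0)" using ev unfolding eig_def by auto
    have "line_set v \<in> bitangents F" using ev bitangent_iff[OF cl c2 ns] unfolding bitangents_def by blast
    then have "line_set v = line_set l1 \<or> line_set v = line_set l2" using xy l by auto
    then show ?thesis using line_set_eq[OF v0 nz(1)] line_set_eq[OF v0 nz(2)] by blast
  qed
  then show ?thesis using e c by blast
qed


lemma addp_self_c2: "(2::'a::comm_ring_1) = 0 \<Longrightarrow> addp u u = ((0,0,0)::'a pt)"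
  by (simp add: vsimps c2_double)
lemma addp_zero: "addp u (0,0,0) = u" "addp (0,0,0) u = u" by (simp_all add: vsimps)
lemma scal_zero: "scal s (0,0,0) = (0,0,0)" "scal 0 u = (0,0,0)" by (simp_all add: vsimps)
lemma addp_comm: "addp u v = addp v u" by (simp add: vsimps algebra_simps)
lemma addp_assoc: "addp (addp u v) w = addp u (addp v w)" by (simp add: vsimps algebra_simps)

lemma sub_structure:
  fixes F :: "_ \<Rightarrow> 'a::field"
  assumes cl: "alg_closed TYPE('a)" and c2: "(2::'a) = 0"
    and a: "NT F a = sq a" and b: "NT F b = (0,0,0)" and cab: "cross a b \<noteq> (0,0,0)"
    and only: "\<forall>v. eig F v \<longrightarrow> det a b v = 0"
  shows "\<exists>m \<beta>. NT F m = scal \<beta> (sq b) \<and> \<beta> \<noteq> 0 \<and> det a b m \<noteq> 0"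
proof -
  obtain m0 where dm: "det a b m0 \<noteq> 0" using exists_e[OF cab] by blast
  have dsq: "det (sq a) (sq b) (sq m0) \<noteq> 0" using dm det_sq[OF c2] by simp
  obtain \<alpha> \<beta> \<gamma> where dec: "NT F m0 = addp (addp (scal \<alpha> (sq a)) (scal \<beta> (sq b))) (scal \<gamma> (sq m0))"
    using span3[OF dsq, of "NT F m0"] by blast
  have g0: "\<gamma> = 0"
  proof (rule ccontr)
    assume g: "\<gamma> \<noteq> 0"
    have "0 < degree [:\<alpha>, 1, \<gamma>:]" using g by simp
    then obtain s where "poly [:\<alpha>, 1, \<gamma>:] s = 0" using root_ex[OF cl] by blast
    then have "\<alpha> + s + \<gamma> * s^2 = 0" by (simp add: algebra_simps power2_eq_square)
    then have "\<gamma> * s^2 = - (\<alpha> + s)" by (simp add: eq_neg_iff_add_eq_0 algebra_simps)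
    then have e1: "\<gamma> * s^2 = \<alpha> + s" using c2_neg[OF c2, of "\<alpha> + s"] by simp
    obtain r where "r^2 = \<beta> / \<gamma>" using sqrt_ex[OF cl] by blast
    then have e2: "\<gamma> * r^2 = \<beta>" using g by simp
    define v where "v = addp (addp m0 (scal s a)) (scal r b)"
    have "NT F v = addp (addp (scal (\<alpha> + s) (sq a)) (scal \<beta> (sq b))) (scal \<gamma> (sq m0))"
      unfolding v_def NT_add NT_scal a b dec by (simp add: vsimps algebra_simps)
    also have "\<dots> = addp (addp (scal (\<gamma> * s^2) (sq a)) (scal (\<gamma> * r^2) (sq b))) (scal \<gamma> (sq m0))"
      unfolding e1 e2 ..
    also have "\<dots> = scal \<gamma> (sq v)"
      unfolding v_def vsq_add[OF c2] vsq_scal by (simp add: vsimps algebra_simps)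
    finally have nv: "NT F v = scal \<gamma> (sq v)" .
    have dv: "det a b v = det a b m0" unfolding v_def det_add3 det_scal3 det_self13 det_self23 by simp
    then have "eig F v" using nv det_nz[of a b v] dm unfolding eig_def by auto
    then show False using only dv dm by metis
  qed
  have b0: "\<beta> \<noteq> 0"
  proof
    assume b0: "\<beta> = 0"
    define v where "v = addp m0 (scal \<alpha> a)"
    have "NT F v = addp (scal \<alpha> (sq a)) (scal \<alpha> (sq a))"
      unfolding v_def NT_add NT_scal a dec b0 g0 by (simp add: vsimps)
    also have "\<dots> = scal 0 (sq v)" by (simp add: addp_self_c2[OF c2] scal_zero)
    finally have nv: "NT F v = scal 0 (sq v)" .
    have dv: "det a b v = det a b m0" unfolding v_def det_add3 det_scal3 det_self13 by simp
    then have "eig F v" using nv det_nz[of a b v] dm unfolding eig_def by auto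
    then show False using only dv dm by metis
  qed
  define m where "m = addp m0 (scal \<alpha> a)"
  have "NT F m = addp (addp (scal \<alpha> (sq a)) (scal \<alpha> (sq a))) (scal \<beta> (sq b))"
    unfolding m_def NT_add NT_scal a dec g0 by (simp add: vsimps algebra_simps)
  also have "\<dots> = scal \<beta> (sq b)" by (simp add: addp_self_c2[OF c2] addp_zero)
  finally have "NT F m = scal \<beta> (sq b)" .
  moreover have "det a b m = det a b m0" unfolding m_def det_add3 det_scal3 det_self13 by simp
  ultimately show ?thesis using b0 dm by metis
qed


lemma K_half:
  fixes F :: "_ \<Rightarrow> 'a::field"
  assumes cl: "alg_closed TYPE('a)" and c2: "(2::'a) = 0"
    and n1: "NT F l1 = scal \<mu> (sq l1)" and mu: "\<mu> \<noteq> 0" and n2: "NT F l2 = (0,0,0)"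
    and c: "cross l1 l2 \<noteq> (0,0,0)"
    and only: "\<forall>v. eig F v \<longrightarrow> cross v l1 = (0,0,0) \<or> cross v l2 = (0,0,0)"
  shows "\<exists>a b m \<beta>. NT F a = sq a \<and> NT F b = (0,0,0) \<and> NT F m = scal \<beta> (sq b) \<and> \<beta> \<noteq> 0 \<and> det a b m \<noteq> 0"
proof -
  define a where "a = scal \<mu> l1"
  have na: "NT F a = sq a" unfolding a_def NT_scal n1 vsq_scal scal_scal by (simp add: power2_eq_square)
  have ca: "cross a l2 \<noteq> (0,0,0)" unfolding a_def cross_scal1 using c mu by (auto simp: vsimps)
  have l10: "l1 \<noteq> (0,0,0)" and l20: "l2 \<noteq> (0,0,0)" using c by (auto simp: vsimps)
  have only': "\<forall>v. eig F v \<longrightarrow> det a l2 v = 0"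
  proof (intro allI impI)
    fix v assume "eig F v"
    then consider "cross v l1 = (0,0,0)" | "cross v l2 = (0,0,0)" using only by blast
    then show "det a l2 v = 0"
    proof cases
      case 1 then obtain s where "v = scal s l1" using par_scal[OF l10] by blast
      then show ?thesis unfolding a_def by (simp add: det_scal3 det_scal1 det_self13)
    next
      case 2 then obtain s where "v = scal s l2" using par_scal[OF l20] by blast
      then show ?thesis by (simp add: det_scal3 det_self23)
    qed
  qed
  obtain m \<beta> where "NT F m = scal \<beta> (sq l2)" "\<beta> \<noteq> 0" "det a l2 m \<noteq> 0"
    using sub_structure[OF cl c2 na n2 ca only'] by blast
  then show ?thesis using na n2 by blast
qed

lemma K_structure:
  fixes F :: "_ \<Rightarrow> 'a::field"
  assumes cl: "alg_closed TYPE('a)" and c2: "(2::'a) = 0"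
    and e1: "eig F l1" and e2: "eig F l2" and c: "cross l1 l2 \<noteq> (0,0,0)"
    and only: "\<forall>v. eig F v \<longrightarrow> cross v l1 = (0,0,0) \<or> cross v l2 = (0,0,0)"
  shows "\<exists>a b m \<beta>. NT F a = sq a \<and> NT F b = (0,0,0) \<and> NT F m = scal \<beta> (sq b) \<and> \<beta> \<noteq> 0 \<and> det a b m \<noteq> 0"
proof -
  obtain \<mu>1 where m1: "NT F l1 = scal \<mu>1 (sq l1)" using e1 unfolding eig_def by blast
  obtain \<mu>2 where m2: "NT F l2 = scal \<mu>2 (sq l2)" using e2 unfolding eig_def by blast
  have c': "cross l2 l1 \<noteq> (0,0,0)" using cross_anti_nz[OF c] .
  have third: False if "eig F v" "cross v l1 \<noteq> (0,0,0)" "cross v l2 \<noteq> (0,0,0)" for v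
    using only that by blast
  consider "\<mu>1 \<noteq> 0" "\<mu>2 \<noteq> 0" | "\<mu>1 = 0" "\<mu>2 = 0" | "\<mu>1 \<noteq> 0" "\<mu>2 = 0" | "\<mu>1 = 0" "\<mu>2 \<noteq> 0" by blast
  then show ?thesis
  proof cases
    case 1
    define v where "v = addp (scal \<mu>1 l1) (scal \<mu>2 l2)"
    have "NT F v = sq v" unfolding v_def NT_add NT_scal m1 m2 vsq_add[OF c2] vsq_scal scal_scal
      by (simp add: power2_eq_square)
    moreover have "v \<noteq> (0,0,0)" using cross_indep[OF c] 1 unfolding indep_def v_def by blast
    ultimately have ev: "eig F v" unfolding eig_def by (metis scal_one)
    have "cross v l1 = scal \<mu>2 (cross l2 l1)" unfolding v_def cross_add1 cross_scal1 cross_self by (simp add: vsimps)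
    then have "cross v l1 \<noteq> (0,0,0)" using 1 c' by (auto simp: vsimps)
    moreover have "cross v l2 = scal \<mu>1 (cross l1 l2)" unfolding v_def cross_add1 cross_scal1 cross_self by (simp add: vsimps)
    then have "cross v l2 \<noteq> (0,0,0)" using 1 c by (auto simp: vsimps)
    ultimately show ?thesis using third ev by blast
  next
    case 2
    define v where "v = addp l1 l2"
    have "NT F v = scal 0 (sq v)" unfolding v_def NT_add m1 m2 2 by (simp add: vsimps)
    moreover have "v \<noteq> (0,0,0)" using cross_indep[OF c] unfolding indep_def v_def
      by (metis scal_one one_neq_zero)
    ultimately have ev: "eig F v" unfolding eig_def by blast
    have "cross v l1 = cross l2 l1" unfolding v_def cross_add1 cross_self by (simp add: vsimps)
    then have "cross v l1 \<noteq> (0,0,0)" using c' by simp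
    moreover have "cross v l2 = cross l1 l2" unfolding v_def cross_add1 cross_self by (simp add: vsimps)
    then have "cross v l2 \<noteq> (0,0,0)" using c by simp
    ultimately show ?thesis using third ev by blast
  next
    case 3
    have "NT F l2 = (0,0,0)" using m2 3 by (simp add: vsimps)
    then show ?thesis using K_half[OF cl c2 m1 3(1) _ c only] by blast
  next
    case 4
    have "NT F l1 = (0,0,0)" using m1 4 by (simp add: vsimps)
    moreover have "\<forall>v. eig F v \<longrightarrow> cross v l2 = (0,0,0) \<or> cross v l1 = (0,0,0)" using only by blast
    ultimately show ?thesis using K_half[OF cl c2 m2 4(2) _ c'] by blast
  qed
qed


locale Kstr =
  fixes F :: "nat \<times> nat \<times> nat \<Rightarrow> 'a::field" and a b m :: "'a pt" and \<beta> :: 'a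
  assumes c2: "(2::'a) = 0"
    and na: "NT F a = sq a" and nb: "NT F b = (0,0,0)" and nm: "NT F m = scal \<beta> (sq b)"
    and b0: "\<beta> \<noteq> 0" and D0: "det a b m \<noteq> 0"
begin

abbreviation "D \<equiv> det a b m"
definition "q1 = cross b m"
definition "q2 = cross m a"
definition "q3 = cross a b"

lemma pair: "dot a q1 = D" "dot b q1 = 0" "dot m q1 = 0"
  "dot a q2 = 0" "dot b q2 = D" "dot m q2 = 0"
  "dot a q3 = 0" "dot b q3 = 0" "dot m q3 = D"
  unfolding q1_def q2_def q3_def by (simp_all add: vsimps algebra_simps)

lemma Wa: "dot a (Wf F X) = (dot a X)^2"
  unfolding dot_W na dot_sq[OF c2] ..
lemma Wb: "dot b (Wf F X) = 0"
  unfolding dot_W nb by (simp add: vsimps)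
lemma Wm: "dot m (Wf F X) = \<beta> * (dot b X)^2"
  unfolding dot_W nm dot_scal1 dot_sq[OF c2] ..

lemma GB: assumes "dot b Y = 0" shows "Wf F Y = scal ((dot a Y)^2 / D) q1"
proof (rule determ[OF D0])
  show "dot a (Wf F Y) = dot a (scal ((dot a Y)^2 / D) q1)" using D0 by (simp add: Wa dot_scal2 pair)
  show "dot b (Wf F Y) = dot b (scal ((dot a Y)^2 / D) q1)" by (simp add: Wb dot_scal2 pair)
  show "dot m (Wf F Y) = dot m (scal ((dot a Y)^2 / D) q1)" by (simp add: Wm dot_scal2 pair assms)
qed

lemma Wq1: "Wf F q1 = scal D q1"
  using GB[OF pair(2)] D0 by (simp add: pair power2_eq_square)
lemma Wq3: "Wf F q3 = (0,0,0)"
  using GB[OF pair(8)] by (simp add: pair scal_zero)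
lemma Wq2: "Wf F q2 = scal (\<beta> * D) q3"
proof (rule determ[OF D0])
  show "dot a (Wf F q2) = dot a (scal (\<beta> * D) q3)" by (simp add: Wa dot_scal2 pair)
  show "dot b (Wf F q2) = dot b (scal (\<beta> * D) q3)" by (simp add: Wb dot_scal2 pair)
  show "dot m (Wf F q2) = dot m (scal (\<beta> * D) q3)" by (simp add: Wm dot_scal2 pair power2_eq_square)
qed

lemma detq: "det q1 q2 q3 = D^2"
  unfolding q1_def q2_def q3_def by (rule det_cross_cross)

lemma cq31: "cross q3 q1 \<noteq> (0,0,0)"
proof
  assume "cross q3 q1 = (0,0,0)"
  then have "det q2 q3 q1 = 0" by (simp add: det_def vsimps)
  then show False using detq D0 det_cyc[of q1 q2 q3] by simp
qed

lemma q1nz: "q1 \<noteq> (0,0,0)" using cq31 by (auto simp: vsimps)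
lemma q3nz: "q3 \<noteq> (0,0,0)" using cq31 by (auto simp: vsimps)
lemma bnz: "b \<noteq> (0,0,0)" using D0 by (auto simp: vsimps)

end


definition kvec :: "'a set \<Rightarrow> 'a pt \<Rightarrow> bool" where
  "kvec k v \<longleftrightarrow> px v \<in> k \<and> py v \<in> k \<and> pz v \<in> k"

context
  fixes k :: "'a::field set"
  assumes sf: "is_subfield k"
begin

lemma sf0: "0 \<in> k" and sf1: "1 \<in> k" using sf unfolding is_subfield_def by auto
lemma sfadd: "x \<in> k \<Longrightarrow> y \<in> k \<Longrightarrow> x + y \<in> k" using sf unfolding is_subfield_def by auto
lemma sfmult: "x \<in> k \<Longrightarrow> y \<in> k \<Longrightarrow> x * y \<in> k" using sf unfolding is_subfield_def by auto
lemma sfneg: "x \<in> k \<Longrightarrow> - x \<in> k" using sf unfolding is_subfield_def by auto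
lemma sfminus: "x \<in> k \<Longrightarrow> y \<in> k \<Longrightarrow> x - y \<in> k" using sfadd sfneg by (metis diff_conv_add_uminus)
lemma sfinv: "x \<in> k \<Longrightarrow> inverse x \<in> k"
  using sf unfolding is_subfield_def by (cases "x = 0") auto
lemma sfdiv: "x \<in> k \<Longrightarrow> y \<in> k \<Longrightarrow> x / y \<in> k" using sfmult sfinv by (simp add: divide_inverse)
lemma sfpow: "x \<in> k \<Longrightarrow> x ^ n \<in> k" by (induction n) (auto intro: sf1 sfmult)

lemmas sfI = sf0 sf1 sfadd sfmult sfneg sfminus sfinv sfdiv sfpow

lemma kvec_addp: "kvec k u \<Longrightarrow> kvec k v \<Longrightarrow> kvec k (addp u v)" by (simp add: kvec_def addp_alt sfI)
lemma kvec_scal: "c \<in> k \<Longrightarrow> kvec k v \<Longrightarrow> kvec k (scal c v)" by (simp add: kvec_def scal_alt sfI)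
lemma kvec_cross: "kvec k u \<Longrightarrow> kvec k v \<Longrightarrow> kvec k (cross u v)" by (simp add: kvec_def cross_def sfI)
lemma kvec_dot: "kvec k u \<Longrightarrow> kvec k v \<Longrightarrow> dot u v \<in> k" by (simp add: kvec_def dot_def sfI)
lemma kvec_det: "kvec k u \<Longrightarrow> kvec k v \<Longrightarrow> kvec k w \<Longrightarrow> det u v w \<in> k" by (simp add: det_def kvec_dot kvec_cross)
lemma kvec_W: "\<forall>m. F m \<in> k \<Longrightarrow> kvec k v \<Longrightarrow> kvec k (Wf F v)" by (simp add: kvec_def Wf_def sfI)
lemma kvec_e: "kvec k (1,0,0)" "kvec k (0,1,0)" "kvec k (0,0,1)" by (simp_all add: kvec_def sfI)

lemma ratio_k:
  assumes "kvec k u" "kvec k v" "v \<noteq> (0,0,0)" "u = scal \<alpha> v" shows "\<alpha> \<in> k"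
proof -
  consider "px v \<noteq> 0" | "py v \<noteq> 0" | "pz v \<noteq> 0" using assms(3) by (auto simp: pt_eq_iff)
  then show ?thesis
  proof cases
    case 1
    have "\<alpha> = px u / px v" using 1 assms(4) by (simp add: scal_alt)
    then show ?thesis using assms(1,2) by (simp add: kvec_def sfI)
  next
    case 2
    have "\<alpha> = py u / py v" using 2 assms(4) by (simp add: scal_alt)
    then show ?thesis using assms(1,2) by (simp add: kvec_def sfI)
  next
    case 3
    have "\<alpha> = pz u / pz v" using 3 assms(4) by (simp add: scal_alt)
    then show ?thesis using assms(1,2) by (simp add: kvec_def sfI)
  qed
qed

lemma coord_k:
  assumes "kvec k u" "kvec k a" "kvec k b" "cross a b \<noteq> (0,0,0)" "u = addp (scal s a) (scal t b)"
  shows "s \<in> k" "t \<in> k"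
proof -
  have "cross u b = scal s (cross a b)" unfolding assms(5) cross_add1 cross_scal1 cross_self by (simp add: vsimps)
  then show "s \<in> k" using ratio_k kvec_cross assms by blast
  have "cross a u = scal t (cross a b)" unfolding assms(5) cross_add2 cross_scal2 cross_self by (simp add: vsimps)
  then show "t \<in> k" using ratio_k kvec_cross assms by blast
qed

lemma sqrt_k:
  assumes fin: "finite k" and c2: "(2::'a) = 0" and x: "x \<in> k"
  shows "\<exists>y\<in>k. y^2 = x"
proof -
  have "(\<lambda>y. y^2) ` k \<subseteq> k" using sfpow by auto
  moreover have "inj_on (\<lambda>y::'a. y^2) k" by (rule inj_onI) (use c2_sqrt_unique[OF c2] in blast)
  ultimately have "(\<lambda>y. y^2) ` k = k" using endo_inj_surj[OF fin] by blast
  then show ?thesis using x by (metis imageE)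
qed

lemma sqrtv_k:
  assumes fin: "finite k" and c2: "(2::'a) = 0" and r: "kvec k r"
  shows "\<exists>c. kvec k c \<and> sq c = r"
proof -
  obtain y1 where "y1 \<in> k" "y1^2 = px r" using sqrt_k[OF fin c2] r unfolding kvec_def by blast
  moreover obtain y2 where "y2 \<in> k" "y2^2 = py r" using sqrt_k[OF fin c2] r unfolding kvec_def by blast
  moreover obtain y3 where "y3 \<in> k" "y3^2 = pz r" using sqrt_k[OF fin c2] r unfolding kvec_def by blast
  ultimately show ?thesis by (intro exI[of _ "(y1,y2,y3)"]) (simp add: kvec_def sq_def)
qed

end

lemma sq_inj: "(2::'a::idom) = 0 \<Longrightarrow> sq u = sq v \<Longrightarrow> u = (v::'a pt)"
  by (simp add: sq_def pt_eq_iff) (meson c2_sqrt_unique)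


definition Nm :: "'a::comm_ring_1 pt \<Rightarrow> 'a pt \<Rightarrow> 'a pt \<Rightarrow> 'a pt \<Rightarrow> 'a pt" where
  "Nm r1 r2 r3 u = (dot r1 u, dot r2 u, dot r3 u)"

lemma binet: "cross (Nm r1 r2 r3 u) (Nm r1 r2 r3 w) =
   (dot (cross r2 r3) (cross u w), dot (cross r3 r1) (cross u w), dot (cross r1 r2) (cross u w))"
  by (simp add: Nm_def vsimps algebra_simps)

abbreviation "row1 F \<equiv> (F(2,1,1), F(0,3,1), F(0,1,3))"
abbreviation "row2 F \<equiv> (F(3,0,1), F(1,2,1), F(1,0,3))"
abbreviation "row3 F \<equiv> (F(3,1,0), F(1,3,0), F(1,1,2))"

lemma W_Nm: "Wf F X = Nm (row1 F) (row2 F) (row3 F) (sq X)"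
  unfolding W_sq Nm_def ..

lemma W_expand: assumes c2: "(2::'a::comm_ring_1) = 0"
  shows "Wf F X = addp (addp (scal (px X^2) (Wf F (1,0,0))) (scal (py X^2) (Wf F (0,1,0)))) (scal (pz X^2) (Wf F ((0,0,1)::'a pt)))"
proof -
  have "X = addp (addp (scal (px X) (1,0,0)) (scal (py X) (0,1,0))) (scal (pz X) (0,0,1))" by (simp add: vsimps)
  then have "Wf F X = Wf F (addp (addp (scal (px X) (1,0,0)) (scal (py X) (0,1,0))) (scal (pz X) (0,0,1)))" by simp
  also have "\<dots> = addp (addp (scal (px X^2) (Wf F (1,0,0))) (scal (py X^2) (Wf F (0,1,0)))) (scal (pz X^2) (Wf F (0,0,1)))"
    by (simp only: W_add[OF c2] W_scal)
  finally show ?thesis .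
qed

lemma W_add3: assumes c2: "(2::'a::comm_ring_1) = 0"
  shows "Wf F (addp (addp (scal x u) (scal y v)) (scal z (w::'a pt))) = addp (addp (scal (x^2) (Wf F u)) (scal (y^2) (Wf F v))) (scal (z^2) (Wf F w))"
  by (simp only: W_add[OF c2] W_scal)

locale Kfin = Kstr F a b m \<beta> for F :: "nat \<times> nat \<times> nat \<Rightarrow> 'a::field" and a b m \<beta> +
  fixes k :: "'a set"
  assumes cl: "alg_closed TYPE('a)" and sf: "is_subfield k" and fin: "finite k" and coeffs: "\<forall>m. F m \<in> k"
begin

lemma G1: "\<exists>c3 \<rho>. kvec k c3 \<and> \<rho> \<noteq> 0 \<and> c3 = scal \<rho> q3"
proof -
  have rowsk: "kvec k (row1 F)" "kvec k (row2 F)" "kvec k (row3 F)" using coeffs by (simp_all add: kvec_def)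
  have perp: "dot (row1 F) (sq q3) = 0" "dot (row2 F) (sq q3) = 0" "dot (row3 F) (sq q3) = 0"
    using Wq3 unfolding W_sq by (simp_all add: pt_eq_iff)
  have main: "\<exists>c3 \<rho>. kvec k c3 \<and> \<rho> \<noteq> 0 \<and> c3 = scal \<rho> q3"
    if r: "kvec k ri" "kvec k rj" "dot (sq q3) ri = 0" "dot (sq q3) rj = 0" "cross ri rj \<noteq> (0,0,0)" for ri rj
  proof -
    obtain \<kappa> where kap: "sq q3 = scal \<kappa> (cross ri rj)" using perp_cross_par[OF r(3,4,5)] by blast
    have k0: "\<kappa> \<noteq> 0" using kap sq_nz[OF q3nz] by (auto simp: vsimps)
    obtain c where c: "kvec k c" "sq c = cross ri rj" using sqrtv_k[OF sf fin c2 kvec_cross[OF sf r(1,2)]] by blast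
    obtain \<rho> where rho: "\<rho>^2 = inverse \<kappa>" using sqrt_ex[OF cl] by blast
    have "sq (scal \<rho> q3) = sq c" unfolding vsq_scal rho kap c scal_scal using k0 by (simp add: scal_one)
    then have "c = scal \<rho> q3" using sq_inj[OF c2] by metis
    moreover have "\<rho> \<noteq> 0" using rho k0 by auto
    ultimately show ?thesis using c by blast
  qed
  have "cross (Wf F q1) (Wf F q2) = scal (D * (\<beta> * D)) (cross q1 q3)"
    unfolding Wq1 Wq2 cross_scal1 cross_scal2 scal_scal by (simp add: mult_ac)
  moreover have "cross q1 q3 \<noteq> (0,0,0)" using cross_anti_nz[OF cq31] .
  ultimately have "cross (Wf F q1) (Wf F q2) \<noteq> (0,0,0)" using D0 b0 by (auto simp: vsimps)
  then have disj: "cross (row2 F) (row3 F) \<noteq> (0,0,0) \<or> cross (row3 F) (row1 F) \<noteq> (0,0,0) \<or> cross (row1 F) (row2 F) \<noteq> (0,0,0)"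
  proof (rule contrapos_np)
    assume "\<not> ?thesis"
    then have z: "cross (row2 F) (row3 F) = (0,0,0)" "cross (row3 F) (row1 F) = (0,0,0)" "cross (row1 F) (row2 F) = (0,0,0)" by blast+
    show "cross (Wf F q1) (Wf F q2) = (0,0,0)" unfolding W_Nm binet z by (simp add: dot_def)
  qed
  have perp': "dot (sq q3) (row1 F) = 0" "dot (sq q3) (row2 F) = 0" "dot (sq q3) (row3 F) = 0"
    using perp by (simp_all add: dot_comm)
  from disj show ?thesis
  proof (elim disjE)
    assume "cross (row2 F) (row3 F) \<noteq> (0,0,0)"
    then show ?thesis using main[OF rowsk(2,3) perp'(2,3)] by blast
  next
    assume "cross (row3 F) (row1 F) \<noteq> (0,0,0)"
    then show ?thesis using main[OF rowsk(3,1) perp'(3,1)] by blast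
  next
    assume "cross (row1 F) (row2 F) \<noteq> (0,0,0)"
    then show ?thesis using main[OF rowsk(1,2) perp'(1,2)] by blast
  qed
qed

end


context Kfin
begin

lemma G2: "\<exists>c1 \<kappa> \<alpha>. kvec k c1 \<and> \<kappa> \<noteq> 0 \<and> c1 = scal \<kappa> q1 \<and> \<alpha> \<in> k \<and> \<alpha> \<noteq> 0 \<and> Wf F c1 = scal \<alpha> c1"
proof -
  have WWq1: "Wf F (Wf F q1) = scal (D^2 * D) q1" unfolding Wq1 W_scal Wq1 scal_scal ..
  then have "Wf F (Wf F q1) \<noteq> (0,0,0)" using D0 q1nz by (auto simp: vsimps)
  moreover have "Wf F (Wf F q1) = addp (addp (scal ((px q1^2)^2) (Wf F (Wf F (1,0,0)))) (scal ((py q1^2)^2) (Wf F (Wf F (0,1,0)))))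
      (scal ((pz q1^2)^2) (Wf F (Wf F (0,0,1))))"
  proof -
    have "Wf F q1 = addp (addp (scal (px q1^2) (Wf F (1,0,0))) (scal (py q1^2) (Wf F (0,1,0)))) (scal (pz q1^2) (Wf F (0,0,1)))"
      by (rule W_expand[OF c2])
    then show ?thesis by (simp only: W_add3[OF c2])
  qed
  ultimately obtain e where e: "kvec k e" "Wf F (Wf F e) \<noteq> (0,0,0)"
  proof -
    assume q: "Wf F (Wf F q1) \<noteq> (0,0,0)" "Wf F (Wf F q1) = addp (addp (scal ((px q1^2)^2) (Wf F (Wf F (1,0,0)))) (scal ((py q1^2)^2) (Wf F (Wf F (0,1,0)))))
      (scal ((pz q1^2)^2) (Wf F (Wf F (0,0,1))))"
      and th: "\<And>e. kvec k e \<Longrightarrow> Wf F (Wf F e) \<noteq> (0,0,0) \<Longrightarrow> thesis"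
    show thesis
    proof (rule ccontr)
      assume "\<not> thesis"
      then have "Wf F (Wf F (1,0,0)) = (0,0,0)" "Wf F (Wf F (0,1,0)) = (0,0,0)" "Wf F (Wf F (0,0,1)) = (0,0,0)"
        using th kvec_e[OF sf] by blast+
      then have "Wf F (Wf F q1) = (0,0,0)" unfolding q(2) by (simp only: scal_zero addp_zero)
      then show False using q(1) by simp
    qed
  qed
  define c1 where "c1 = Wf F (Wf F e)"
  have kc1: "kvec k c1" unfolding c1_def using kvec_W[OF sf coeffs] e(1) by blast
  define \<kappa> where "\<kappa> = (dot a (Wf F e))^2 / D"
  have c1q: "c1 = scal \<kappa> q1" unfolding c1_def \<kappa>_def using GB[OF Wb] .
  have k0: "\<kappa> \<noteq> 0" using e(2) c1q unfolding c1_def by (auto simp: vsimps)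
  have Wc1: "Wf F c1 = scal (\<kappa> * D) c1" unfolding c1q W_scal Wq1 scal_scal by (simp add: power2_eq_square mult_ac)
  have "\<kappa> * D \<in> k" using ratio_k[OF sf kvec_W[OF sf coeffs kc1] kc1 _ Wc1] e(2) unfolding c1_def by blast
  moreover have "\<kappa> * D \<noteq> 0" using k0 D0 by simp
  ultimately show ?thesis using kc1 k0 c1q Wc1 by blast
qed

end


context Kfin
begin

lemma G3: "\<exists>C1 C2 C3 t. kvec k C1 \<and> kvec k C2 \<and> kvec k C3 \<and> t \<in> k \<and> t \<noteq> 0 \<and>
    Wf F C1 = scal t C1 \<and> Wf F C2 = scal t C3 \<and> Wf F C3 = (0,0,0) \<and> det C1 C2 C3 \<noteq> 0"
proof -
  obtain c3 \<rho> where c3: "kvec k c3" "\<rho> \<noteq> 0" "c3 = scal \<rho> q3" using G1 by blast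
  obtain c1 \<kappa> \<alpha> where c1: "kvec k c1" "\<kappa> \<noteq> 0" "c1 = scal \<kappa> q1" "\<alpha> \<in> k" "\<alpha> \<noteq> 0" "Wf F c1 = scal \<alpha> c1"
    using G2 by blast
  have Wc3: "Wf F c3 = (0,0,0)" unfolding c3(3) W_scal Wq3 scal_zero ..
  have c13: "cross c1 c3 \<noteq> (0,0,0)"
  proof -
    have "cross c1 c3 = scal (\<kappa> * \<rho>) (cross q1 q3)" unfolding c1(3) c3(3) cross_scal1 cross_scal2 scal_scal
      by (simp add: mult_ac)
    then show ?thesis using cross_anti_nz[OF cq31] c1(2) c3(2) by (auto simp: vsimps)
  qed
  have c31: "cross c3 c1 \<noteq> (0,0,0)" using cross_anti_nz[OF c13] .
  have bc1: "dot b c1 = 0" unfolding c1(3) dot_scal2 pair by simp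
  have bc3: "dot b c3 = 0" unfolding c3(3) dot_scal2 pair by simp
  obtain e where e: "kvec k e" "cross (Wf F e) c1 \<noteq> (0,0,0)"
  proof -
    assume th: "\<And>e. kvec k e \<Longrightarrow> cross (Wf F e) c1 \<noteq> (0,0,0) \<Longrightarrow> thesis"
    show thesis
    proof (rule ccontr)
      assume "\<not> thesis"
      then have z: "cross (Wf F (1,0,0)) c1 = (0,0,0)" "cross (Wf F (0,1,0)) c1 = (0,0,0)" "cross (Wf F (0,0,1)) c1 = (0,0,0)"
        using th kvec_e[OF sf] by blast+
      have "cross (Wf F q2) c1 = (0,0,0)"
        by (subst W_expand[OF c2]) (simp only: cross_add1 cross_scal1 z scal_zero addp_zero)
      moreover have "cross (Wf F q2) c1 = scal (\<beta> * D * \<kappa>) (cross q3 q1)"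
        unfolding Wq2 c1(3) cross_scal1 cross_scal2 scal_scal by (simp add: mult_ac)
      ultimately show False using cq31 b0 D0 c1(2) by (auto simp: vsimps)
    qed
  qed
  have "det c1 c3 (Wf F e) = 0" using det_perp[OF bnz bc1 bc3 Wb] .
  then obtain s t where st: "Wf F e = addp (scal s c1) (scal t c3)" using span2[OF c13] by blast
  have sk: "s \<in> k" and tk: "t \<in> k" using coord_k[OF sf kvec_W[OF sf coeffs e(1)] c1(1) c3(1) c13 st] by auto
  have t0: "t \<noteq> 0"
  proof
    assume "t = 0"
    then have "cross (Wf F e) c1 = scal s (cross c1 c1)" unfolding st by (simp add: cross_add1 cross_scal1 scal_zero addp_zero)
    then show False using e(2) by (simp add: cross_self scal_zero)
  qed
  obtain \<sigma> where sig: "\<sigma> \<in> k" "\<sigma>^2 = s / \<alpha>" using sqrt_k[OF sf fin c2] sk c1(4) sfdiv[OF sf] by blast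
  define v where "v = addp e (scal \<sigma> c1)"
  have kv: "kvec k v" unfolding v_def using kvec_addp[OF sf] kvec_scal[OF sf] e(1) sig(1) c1(1) by blast
  have Wv: "Wf F v = scal t c3"
  proof -
    have "Wf F v = addp (addp (scal s c1) (scal t c3)) (scal (s / \<alpha> * \<alpha>) c1)"
      unfolding v_def W_add[OF c2] W_scal st c1(6) sig(2) scal_scal ..
    also have "\<dots> = addp (scal t c3) (addp (scal s c1) (scal s c1))" using c1(5) by (simp add: vsimps algebra_simps)
    also have "\<dots> = scal t c3" by (simp add: addp_self_c2[OF c2] addp_zero)
    finally show ?thesis .
  qed
  have dv: "det c1 v c3 \<noteq> 0"
  proof
    assume "det c1 v c3 = 0"
    then have "det c1 c3 v = 0" using det_cyc[of c1 c3 v] det_swap[of v c3 c1] det_cyc[of c1 v c3] by simp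
    then obtain p q where pq: "v = addp (scal p c1) (scal q c3)" using span2[OF c13] by blast
    have "Wf F v = scal (p^2 * \<alpha>) c1" unfolding pq W_add[OF c2] W_scal c1(6) Wc3 scal_scal
      by (simp add: scal_zero addp_zero)
    then have "scal t c3 = scal (p^2 * \<alpha>) c1" using Wv by simp
    then have "cross (scal t c3) c1 = (0,0,0)" by (simp add: cross_scal1 cross_self scal_zero)
    then show False using t0 c31 by (auto simp: vsimps cross_scal1)
  qed
  define C1 where "C1 = scal (t / \<alpha>) c1"
  have kC1: "kvec k C1" unfolding C1_def using kvec_scal[OF sf] sfdiv[OF sf tk c1(4)] c1(1) by blast
  have WC1: "Wf F C1 = scal t C1" unfolding C1_def W_scal c1(6) scal_scal using c1(5)
    by (simp add: power2_eq_square field_simps)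
  have dC: "det C1 v c3 \<noteq> 0" unfolding C1_def det_scal1 using dv t0 c1(5) by simp
  show ?thesis using kC1 kv c3(1) tk t0 WC1 Wv Wc3 dC by blast
qed

end


lemma EvQ3: "EvQ F (addp (addp (scal x U1) (scal y U2)) (scal z U3)) =
   x^2 * EvQ F U1 + y^2 * EvQ F U2 + z^2 * EvQ F U3
   + x*y * (EvQ F (addp U1 U2) - EvQ F U1 - EvQ F U2)
   + x*z * (EvQ F (addp U1 U3) - EvQ F U1 - EvQ F U3)
   + y*z * (EvQ F (addp U2 U3) - EvQ F U2 - EvQ F U3)"
  by (simp add: fsimps vsimps algebra_simps power2_eq_square)

lemma mv3: assumes c2: "(2::'a::comm_ring_1) = 0"
  shows "dot (mv (addp (addp (scal x C1) (scal y C2)) (scal z C3))) (c::'a pt) =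
    x^2 * dot (mv C1) c + y^2 * dot (mv C2) c + z^2 * dot (mv C3) c
    + x*y * dot (cross C1 C2) c + x*z * dot (cross C1 C3) c + y*z * dot (cross C2 C3) c"
  by (simp add: fsimps vsimps c2_minus[OF c2] algebra_simps power2_eq_square)

lemma final_expand:
  fixes F :: "_ \<Rightarrow> 'a::field"
  assumes c2: "(2::'a) = 0" and WC1: "Wf F C1 = scal t C1" and WC2: "Wf F C2 = scal t C3"
    and WC3: "Wf F C3 = (0,0,0)"
  shows "evf F 4 (addp (addp (scal x C1) (scal y C2)) (scal z C3)) =
    (EvQ F (sq C1) + t * dot (mv C1) C1) * x^4 + (EvQ F (sq C2) + t * dot (mv C2) C3) * y^4 + EvQ F (sq C3) * z^4
    + (EvQ F (addp (sq C1) (sq C2)) - EvQ F (sq C1) - EvQ F (sq C2) + t * dot (mv C2) C1 + t * dot (mv C1) C3) * (x^2*y^2)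
    + (EvQ F (addp (sq C1) (sq C3)) - EvQ F (sq C1) - EvQ F (sq C3) + t * dot (mv C3) C1) * (x^2*z^2)
    + (EvQ F (addp (sq C2) (sq C3)) - EvQ F (sq C2) - EvQ F (sq C3) + t * dot (mv C3) C3) * (y^2*z^2)
    + t * det C1 C2 C3 * (x^2*y*z + x*y^3)" (is "_ = ?R")
proof -
  let ?X = "addp (addp (scal x C1) (scal y C2)) (scal z C3)"
  have sqX: "sq ?X = addp (addp (scal (x^2) (sq C1)) (scal (y^2) (sq C2))) (scal (z^2) (sq C3))"
    by (simp add: vsq_add[OF c2] vsq_scal)
  have WX: "Wf F ?X = addp (scal (t * x^2) C1) (scal (t * y^2) C3)"
    unfolding W_add3[OF c2] WC1 WC2 WC3 by (simp add: vsimps algebra_simps)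
  have d: "dot (cross C1 C2) C1 = 0" "dot (cross C1 C3) C1 = 0" "dot (cross C2 C3) C1 = det C1 C2 C3"
     "dot (cross C1 C2) C3 = det C1 C2 C3" "dot (cross C1 C3) C3 = 0" "dot (cross C2 C3) C3 = 0"
    by (simp_all add: vsimps algebra_simps)
  have "evf F 4 ?X = EvQ F (sq ?X) + dot (mv ?X) (Wf F ?X)" by (rule evf_struct)
  also have "\<dots> = EvQ F (sq ?X) + t * x^2 * dot (mv ?X) C1 + t * y^2 * dot (mv ?X) C3"
    unfolding WX dot_add2 dot_scal2 by simp
  also have "\<dots> = ?R"
    unfolding sqX EvQ3 mv3[OF c2] d
    by (simp add: algebra_simps power2_eq_square power3_eq_cube power4_eq_xxxx)
  finally show ?thesis .
qed


lemma rhs_c2: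
  fixes T :: "'a::field"
  assumes c2: "(2::'a) = 0" and T0: "T \<noteq> 0"
    and ha: "a^2 = A1 / T" and hb: "b^2 = A2 / T" and hc: "c^2 = A3 / T"
    and hd: "d^2 = A12 / T" and he: "e^2 = A23 / T" and hf: "f^2 = A13 / T"
  shows "T * ((a*x^2 + b*y^2 + c*z^2 + d*x*y + e*y*z + f*z*x)^2 - x*y*(y^2 + x*z)) =
    A1 * x^4 + A2 * y^4 + A3 * z^4 + A12 * (x^2*y^2) + A13 * (x^2*z^2) + A23 * (y^2*z^2) + T * (x^2*y*z + x*y^3)"
proof -
  have "(a*x^2 + b*y^2 + c*z^2 + d*x*y + e*y*z + f*z*x)^2 =
     a^2*(x^2)^2 + b^2*(y^2)^2 + c^2*(z^2)^2 + d^2*(x^2*y^2) + e^2*(y^2*z^2) + f^2*(x^2*z^2)"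
    by (simp only: c2_sq_add[OF c2] power_mult_distrib) (simp add: algebra_simps)
  also have "\<dots> = (A1 * x^4 + A2 * y^4 + A3 * z^4 + A12 * (x^2*y^2) + A13 * (x^2*z^2) + A23 * (y^2*z^2)) / T"
    unfolding ha hb hc hd he hf using T0 by (simp add: field_simps power_mult[symmetric])
  finally have q: "(a*x^2 + b*y^2 + c*z^2 + d*x*y + e*y*z + f*z*x)^2 = (A1 * x^4 + A2 * y^4 + A3 * z^4 + A12 * (x^2*y^2) + A13 * (x^2*z^2) + A23 * (y^2*z^2)) / T" .
  show ?thesis unfolding q c2_minus[OF c2] using T0
    by (simp add: field_simps power2_eq_square power3_eq_cube)
qed


lemma kvec_EvQ: "is_subfield k \<Longrightarrow> \<forall>m. F m \<in> k \<Longrightarrow> kvec k u \<Longrightarrow> EvQ F u \<in> k"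
  by (simp add: EvQ_def kvec_def sfI)
lemma kvec_mv: "is_subfield k \<Longrightarrow> kvec k u \<Longrightarrow> kvec k (mv u)"
  by (simp add: mv_def kvec_def sfI)
lemma kvec_sq: "is_subfield k \<Longrightarrow> kvec k u \<Longrightarrow> kvec k (sq u)"
  by (simp add: sq_def kvec_def sfI)

lemma final_k:
  fixes F :: "_ \<Rightarrow> 'a::field" and k :: "'a set"
  assumes c2: "(2::'a) = 0" and sf: "is_subfield k" and fin: "finite k" and coeffs: "\<forall>m. F m \<in> k"
    and ns: "nonsingular_quartic F"
    and kC: "kvec k C1" "kvec k C2" "kvec k C3" and tk: "t \<in> k" and t0: "t \<noteq> 0"
    and WC1: "Wf F C1 = scal t C1" and WC2: "Wf F C2 = scal t C3" and WC3: "Wf F C3 = (0,0,0)"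
    and dC: "det C1 C2 C3 \<noteq> 0"
  shows "\<exists>M. (\<forall>i j. M i j \<in> k) \<and> det3 M \<noteq> 0 \<and>
           (\<exists>a\<in>k. \<exists>b\<in>k. \<exists>c\<in>k. \<exists>d\<in>k. \<exists>e\<in>k. \<exists>f\<in>k. a * c \<noteq> 0 \<and>
             (\<exists>t. t \<noteq> 0 \<and>
               (\<forall>x y z. evf F 4 (mapply M (x, y, z)) =
                  t * ((a*x^2 + b*y^2 + c*z^2 + d*x*y + e*y*z + f*z*x)^2
                       - x*y*(y^2 + x*z)))))"
proof -
  define T where "T = t * det C1 C2 C3"
  have T0: "T \<noteq> 0" unfolding T_def using t0 dC by simp
  have Tk: "T \<in> k" unfolding T_def using tk kvec_det[OF sf kC] sfmult[OF sf] by blast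
  define A1 where "A1 = EvQ F (sq C1) + t * dot (mv C1) C1"
  define A2 where "A2 = EvQ F (sq C2) + t * dot (mv C2) C3"
  define A3 where "A3 = EvQ F (sq C3)"
  define A12 where "A12 = EvQ F (addp (sq C1) (sq C2)) - EvQ F (sq C1) - EvQ F (sq C2) + t * dot (mv C2) C1 + t * dot (mv C1) C3"
  define A13 where "A13 = EvQ F (addp (sq C1) (sq C3)) - EvQ F (sq C1) - EvQ F (sq C3) + t * dot (mv C3) C1"
  define A23 where "A23 = EvQ F (addp (sq C2) (sq C3)) - EvQ F (sq C2) - EvQ F (sq C3) + t * dot (mv C3) C3"
  have ksq: "kvec k (sq C1)" "kvec k (sq C2)" "kvec k (sq C3)" using kvec_sq[OF sf] kC by auto
  have kE: "\<And>u. kvec k u \<Longrightarrow> EvQ F u \<in> k" using kvec_EvQ[OF sf coeffs] .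
  have kD: "\<And>u v. kvec k u \<Longrightarrow> kvec k v \<Longrightarrow> dot (mv u) v \<in> k" using kvec_dot[OF sf] kvec_mv[OF sf] by blast
  have kadd: "\<And>u v. kvec k u \<Longrightarrow> kvec k v \<Longrightarrow> kvec k (addp u v)" using kvec_addp[OF sf] .
  have Ak: "A1 \<in> k" "A2 \<in> k" "A3 \<in> k" "A12 \<in> k" "A13 \<in> k" "A23 \<in> k"
    unfolding A1_def A2_def A3_def A12_def A13_def A23_def
    using kE kD kadd ksq kC tk by (simp_all add: sfI[OF sf])
  have sq: "\<And>A. A \<in> k \<Longrightarrow> \<exists>r\<in>k. r^2 = A / T" using sqrt_k[OF sf fin c2] sfdiv[OF sf] Tk by blast
  obtain a where a: "a \<in> k" "a^2 = A1 / T" using sq[OF Ak(1)] by blast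
  obtain b where b: "b \<in> k" "b^2 = A2 / T" using sq[OF Ak(2)] by blast
  obtain c where c: "c \<in> k" "c^2 = A3 / T" using sq[OF Ak(3)] by blast
  obtain d where d: "d \<in> k" "d^2 = A12 / T" using sq[OF Ak(4)] by blast
  obtain e where e: "e \<in> k" "e^2 = A23 / T" using sq[OF Ak(6)] by blast
  obtain f where f: "f \<in> k" "f^2 = A13 / T" using sq[OF Ak(5)] by blast
  define comp :: "nat \<Rightarrow> 'a pt \<Rightarrow> 'a" where "comp i v = (if i = 0 then px v else if i = 1 then py v else if i = 2 then pz v else 0)" for i v
  define M :: "nat \<Rightarrow> nat \<Rightarrow> 'a" where "M i j = (if j = 0 then comp i C1 else if j = 1 then comp i C2 else if j = 2 then comp i C3 else 0)" for i j
  have Mk: "\<forall>i j. M i j \<in> k" using kC sf0[OF sf] unfolding M_def comp_def kvec_def by auto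
  have Mdet: "det3 M = det C1 C2 C3" unfolding det3_def M_def comp_def by (simp add: vsimps algebra_simps)
  have Map: "mapply M (x,y,z) = addp (addp (scal x C1) (scal y C2)) (scal z C3)" for x y z
    unfolding M_def comp_def by (simp add: vsimps algebra_simps)
  have iden: "evf F 4 (mapply M (x, y, z)) = T * ((a*x^2 + b*y^2 + c*z^2 + d*x*y + e*y*z + f*z*x)^2 - x*y*(y^2 + x*z))" for x y z
    unfolding Map final_expand[OF c2 WC1 WC2 WC3] rhs_c2[OF c2 T0 a(2) b(2) c(2) d(2) e(2) f(2)]
    unfolding A1_def A2_def A3_def A12_def A13_def A23_def T_def by (simp add: algebra_simps)
  have C1nz: "C1 \<noteq> (0,0,0)" and C3nz: "C3 \<noteq> (0,0,0)" using dC by (auto simp: vsimps)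
  have sing: False if "evf F 4 C \<noteq> 0 \<Longrightarrow> False" "cross C (Wf F C) = (0,0,0)" "C \<noteq> (0,0,0)" for C
  proof -
    have "evf (dX F) 3 C = 0" "evf (dY F) 3 C = 0" "evf (dZ F) 3 C = 0"
      using that(2) by (simp_all add: grad_x[OF c2] grad_y[OF c2] grad_z[OF c2])
    then show False using ns that(1,3) unfolding nonsingular_quartic_def by blast
  qed
  have a0: "a \<noteq> 0"
  proof
    assume "a = 0"
    then have "evf F 4 C1 = 0" using iden[of 1 0 0] unfolding Map by (simp add: vsimps)
    moreover have "cross C1 (Wf F C1) = (0,0,0)" unfolding WC1 cross_scal2 cross_self by (simp add: scal_zero)
    ultimately show False using sing C1nz by blast
  qed
  have c0: "c \<noteq> 0"
  proof
    assume "c = 0"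
    then have "evf F 4 C3 = 0" using iden[of 0 0 1] unfolding Map by (simp add: vsimps)
    moreover have "cross C3 (Wf F C3) = (0,0,0)" unfolding WC3 by (simp add: vsimps)
    ultimately show False using sing C3nz by blast
  qed
  have ac: "a * c \<noteq> 0" using a0 c0 by simp
  have ex: "\<exists>t. t \<noteq> 0 \<and> (\<forall>x y z. evf F 4 (mapply M (x, y, z)) =
                  t * ((a*x^2 + b*y^2 + c*z^2 + d*x*y + e*y*z + f*z*x)^2 - x*y*(y^2 + x*z)))"
    using T0 iden by blast
  have dM: "det3 M \<noteq> 0" using Mdet dC by simp
  show ?thesis using Mk dM ex ac a(1) b(1) c(1) d(1) e(1) f(1) by blast
qed


theorem proposition2p3:
  fixes k :: "'K::field set" and F :: "nat \<times> nat \<times> nat \<Rightarrow> 'K"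
  assumes closed: "alg_closed TYPE('K)"
    and char2: "(2::'K) = 0"
    and subf: "is_subfield k" and fin: "finite k"
    and alg: "\<forall>x::'K. algebraic_over k x"
    and quartic: "is_form 4 F" and coeffs: "\<forall>m. F m \<in> k"
    and nonsing: "nonsingular_quartic F"
    and two: "card (bitangents F) = 2"
  shows "\<exists>M. (\<forall>i j. M i j \<in> k) \<and> det3 M \<noteq> 0 \<and>
           (\<exists>a\<in>k. \<exists>b\<in>k. \<exists>c\<in>k. \<exists>d\<in>k. \<exists>e\<in>k. \<exists>f\<in>k. a * c \<noteq> 0 \<and>
             (\<exists>t. t \<noteq> 0 \<and>
               (\<forall>x y z. evf F 4 (mapply M (x, y, z)) =
                  t * ((a*x^2 + b*y^2 + c*z^2 + d*x*y + e*y*z + f*z*x)^2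
                       - x*y*(y^2 + x*z)))))"
proof -
  obtain l1 l2 where l: "eig F l1" "eig F l2" "cross l1 l2 \<noteq> (0,0,0)"
      "\<forall>v. eig F v \<longrightarrow> cross v l1 = (0,0,0) \<or> cross v l2 = (0,0,0)"
    using two_lines[OF closed char2 nonsing two] by blast
  obtain a b m \<beta> where s: "NT F a = sq a" "NT F b = (0,0,0)" "NT F m = scal \<beta> (sq b)" "\<beta> \<noteq> 0" "det a b m \<noteq> 0"
    using K_structure[OF closed char2 l] by blast
  interpret K: Kfin F a b m \<beta> k
    by (unfold_locales) (use s closed subf fin coeffs char2 in auto)
  obtain C1 C2 C3 t where C: "kvec k C1" "kvec k C2" "kvec k C3" "t \<in> k" "t \<noteq> 0"
      "Wf F C1 = scal t C1" "Wf F C2 = scal t C3" "Wf F C3 = (0,0,0)" "det C1 C2 C3 \<noteq> 0"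
    using K.G3 by blast
  show ?thesis using final_k[OF char2 subf fin coeffs nonsing C] .
qed


end
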